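(* Let $p(n)$ denote the number of integer partitions of a nonnegative integer $n$, and set $p(-k)=0$ for every positive integer $k$. Then for all integers $N$ and $\ell$, $$V_d\left(\ell,\,N+\frac{|\ell|(|\ell|+1)}{2}\right)=\sum_{n\ge 0}\left(\frac{-3}{2n+1}\right)p\left(N-\frac{2n(n+1)}{3}-n|\ell|\right),$$ where $\left(\frac{-3}{\cdot}\right)$ is the Kronecker symbol (so $\left(\frac{-3}{2n+1}\right)$ equals $1$ if $n\equiv 0 \pmod 3$, $0$ if $n\equiv 1\pmod 3$, and $-1$ if $n\equiv 2\pmod 3$). In particular, for all integers $m,n$ with $0\le n<\frac{|m|(|m|+5)}{2}+4$, $$V_d(m,n)=p\left(n-\frac{|m|(|m|+1)}{2}\right).$$
   Context: A strongly concave composition of a nonnegative integer $n$ is a finite sequence of nonnegative integers $(a_1,\dots,a_s)$, $s\ge 1$, summing to $n$, such that for some index $k$ with $1\le k\le s$ one has $a_1>a_2>\dots>a_{k-1}>a_k<a_{k+1}<\dots<a_s$; $a_k$ is called the central part. Its rank is $s-2k+1$. $V_d(m,n)$ denotes the number of strongly concave compositions of $n$ with rank $m$ (and $V_d(m,n)=0$ for $n<0$). $p(n)$ is the partition function, with $p(n)=0$ for negative integers $n$. *)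

theory Defs
  imports Complex_Main "HOL-Library.Multiset"
begin

definition partitions_count :: "int \<Rightarrow> int" where
  "partitions_count n =
     (if n < 0 then 0
      else int (card {M :: nat multiset. (\<forall>x\<in>#M. 0 < x) \<and> sum_mset M = nat n}))"

(* A list c = (a_1,...,a_s) is strongly concave with central part at position k
   (1-indexed): a_1 > ... > a_{k-1} > a_k < a_{k+1} < ... < a_s. *)
definition strongly_concave_at :: "nat list \<Rightarrow> nat \<Rightarrow> bool" where
  "strongly_concave_at c k \<longleftrightarrow> 1 \<le> k \<and> k \<le> length c \<and>
     (\<forall>i. 1 \<le> i \<and> i < k \<longrightarrow> c ! (i - 1) > c ! i) \<and>
     (\<forall>i. k \<le> i \<and> i < length c \<longrightarrow> c ! (i - 1) < c ! i)"

definition Vd :: "int \<Rightarrow> int \<Rightarrow> int" where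
  "Vd m n =
     (if n < 0 then 0
      else int (card {c :: nat list. sum_list c = nat n \<and>
              (\<exists>k. strongly_concave_at c k \<and>
                   int (length c) - 2 * int k + 1 = m)}))"

(* Kronecker symbol (-3 / 2n+1) *)
definition kron_m3 :: "nat \<Rightarrow> int" where
  "kron_m3 n = (if n mod 3 = 0 then 1 else if n mod 3 = 1 then 0 else -1)"

end

theory Submission
  imports Defs "HOL-Computational_Algebra.Formal_Power_Series"
begin

unbundle fps_syntax


definition qp :: "nat \<Rightarrow> real fps" where "qp k = (\<Prod>i\<in>{1..k}. 1 - fps_X ^ i)"
definition ip :: "nat \<Rightarrow> real fps" where "ip k = inverse (qp k)"
definition ig :: "nat \<Rightarrow> real fps" where "ig k = inverse (1 - fps_X ^ k)"

lemma qp_0[simp]: "qp 0 = 1" by (simp add: qp_def)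
lemma qp_Suc: "qp (Suc k) = qp k * (1 - fps_X ^ Suc k)"
  by (simp add: qp_def prod.cl_ivl_Suc mult.commute)
lemma one_minus_X_nth0: "k \<ge> 1 \<Longrightarrow> (1 - fps_X ^ k :: real fps) $ 0 = 1"
  by (cases k) auto
lemma qp_nth0[simp]: "qp k $ 0 = 1"
  by (induction k) (simp_all add: qp_Suc)
lemma ip_0[simp]: "ip 0 = 1" by (simp add: ip_def)
lemma ip_Suc: "ip (Suc k) = ip k * ig (Suc k)"
  by (simp add: ip_def ig_def qp_Suc fps_inverse_mult)
lemma ig_inv: "k \<ge> 1 \<Longrightarrow> ig k * (1 - fps_X ^ k) = 1"
  unfolding ig_def by (rule inverse_mult_eq_1) (simp add: one_minus_X_nth0)
lemma ip_inv: "ip k * qp k = 1"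
  unfolding ip_def by (rule inverse_mult_eq_1) simp
lemma ig_rec: "k \<ge> 1 \<Longrightarrow> fps_X ^ k * ig k = ig k - 1"
proof -
  assume "k \<ge> 1"
  from ig_inv[OF this] have "ig k - ig k * fps_X ^ k = 1" by (simp add: algebra_simps)
  thus ?thesis by (simp add: algebra_simps)
qed

lemma ig_key:
  assumes "k1 \<ge> 1" "k2 \<ge> 1"
  shows "ig k1 * ig k2 = ig (k1 + k2) * (ig k1 + ig k2 - 1)"
proof -
  define u v w where "u = ig k1" "v = ig k2" "w = ig (k1+k2)"
  have hu: "fps_X ^ k1 * u = u - 1" using ig_rec[OF assms(1)] u_v_w_def by simp
  have hv: "fps_X ^ k2 * v = v - 1" using ig_rec[OF assms(2)] u_v_w_def by simp
  have hw: "w * (1 - fps_X ^ (k1+k2)) = 1" using ig_inv[of "k1+k2"] assms u_v_w_def by simp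
  have "fps_X ^ (k1+k2) * (u*v) = (fps_X ^ k1 * u) * (fps_X ^ k2 * v)"
    by (simp add: power_add algebra_simps)
  also have "\<dots> = (u-1)*(v-1)" by (simp add: hu hv)
  finally have h: "u + v - 1 = u*v*(1 - fps_X ^ (k1+k2))" by (simp add: algebra_simps)
  have "w * (u + v - 1) = u * v * (w * (1 - fps_X ^ (k1+k2)))" by (simp add: h algebra_simps)
  also have "\<dots> = u*v" by (simp add: hw)
  finally show ?thesis by (simp add: u_v_w_def)
qed

definition isum :: "(nat \<Rightarrow> real fps) \<Rightarrow> real fps" where
  "isum f = Abs_fps (\<lambda>n. (\<Sum>b\<le>n. f b) $ n)"
definition lowo :: "(nat \<Rightarrow> real fps) \<Rightarrow> bool" where
  "lowo f \<longleftrightarrow> (\<forall>b n. n < b \<longrightarrow> f b $ n = 0)"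

lemma isum_nth: assumes "lowo f" "n \<le> N" shows "isum f $ n = (\<Sum>b\<le>N. f b) $ n"
proof -
  have "(\<Sum>b\<le>N. f b) $ n = (\<Sum>b\<le>N. f b $ n)" by (simp add: fps_sum_nth)
  also have "\<dots> = (\<Sum>b\<le>n. f b $ n)"
    by (rule sum.mono_neutral_right) (use assms in \<open>auto simp: lowo_def\<close>)
  finally show ?thesis by (simp add: isum_def fps_sum_nth)
qed

lemma isum_nth': "isum f $ n = (\<Sum>b\<le>n. f b $ n)"
  by (simp add: isum_def fps_sum_nth)

lemma isum_add: "isum (\<lambda>b. f b + g b) = isum f + isum g"
  by (rule fps_ext) (simp add: isum_nth' sum.distrib)
lemma isum_diff: "isum (\<lambda>b. f b - g b) = isum f - isum g"
  by (rule fps_ext) (simp add: isum_nth' sum_subtractf)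
lemma isum_uminus: "isum (\<lambda>b. - f b) = - isum f"
  by (rule fps_ext) (simp add: isum_nth' sum_negf)

lemma lowo_add: "lowo f \<Longrightarrow> lowo g \<Longrightarrow> lowo (\<lambda>b. f b + g b)"
  by (simp add: lowo_def)
lemma lowo_diff: "lowo f \<Longrightarrow> lowo g \<Longrightarrow> lowo (\<lambda>b. f b - g b)"
  by (simp add: lowo_def)
lemma lowo_mult: assumes "lowo f" shows "lowo (\<lambda>b. g * f b)"
  unfolding lowo_def
proof (intro allI impI)
  fix b n assume "n < (b::nat)"
  then show "(g * f b) $ n = 0" using assms by (auto simp: lowo_def fps_mult_nth intro!: sum.neutral)
qed
lemma lowo_X: assumes "\<And>b. b \<le> e b" shows "lowo (\<lambda>b. fps_X ^ (e b) * h b)"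
  unfolding lowo_def using assms by (auto simp: fps_X_power_mult_nth intro: less_le_trans)

lemma isum_mult: assumes "lowo f" shows "isum (\<lambda>b. g * f b) = g * isum f"
proof (rule fps_ext)
  fix n
  have "(g * isum f) $ n = (\<Sum>i=0..n. g $ i * isum f $ (n - i))" by (simp add: fps_mult_nth)
  also have "\<dots> = (\<Sum>i=0..n. g $ i * (\<Sum>b\<le>n. f b) $ (n - i))"
    by (rule sum.cong) (auto simp: isum_nth[OF assms])
  also have "\<dots> = (g * (\<Sum>b\<le>n. f b)) $ n" by (simp add: fps_mult_nth)
  also have "\<dots> = (\<Sum>b\<le>n. g * f b) $ n" by (simp add: sum_distrib_left)
  also have "\<dots> = isum (\<lambda>b. g * f b) $ n" by (simp add: isum_def)
  finally show "isum (\<lambda>b. g * f b) $ n = (g * isum f) $ n" by simp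
qed

lemma isum_shift: assumes "lowo f" shows "isum f = f 0 + isum (\<lambda>b. f (Suc b))"
proof (rule fps_ext)
  fix n
  have "isum f $ n = (\<Sum>b\<le>Suc n. f b $ n)"
    using isum_nth[OF assms, of n "Suc n"] by (simp add: fps_sum_nth)
  also have "\<dots> = f 0 $ n + (\<Sum>b\<le>n. f (Suc b) $ n)"
    by (subst sum.atMost_Suc_shift) simp
  finally show "isum f $ n = (f 0 + isum (\<lambda>b. f (Suc b))) $ n" by (simp add: isum_nth')
qed


definition tt :: "nat \<Rightarrow> nat \<Rightarrow> real fps" where
  "tt m b = fps_X ^ (b*(b+m)) * ip b * ip (b+m)"
definition ss :: "nat \<Rightarrow> nat \<Rightarrow> real fps" where
  "ss m b = (if b = 0 then 0 else fps_X ^ (b*(b+m)) * ip (b-1) * ip (b+m))"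
definition Dur :: "nat \<Rightarrow> real fps" where "Dur m = isum (tt m)"

lemma lowo_tt: "lowo (tt m)"
proof -
  have "lowo (\<lambda>b. fps_X ^ (b*(b+m)) * (ip b * ip (b+m)))"
    by (rule lowo_X) (simp add: le_square trans_le_add1 )
  thus ?thesis unfolding tt_def by (simp add: mult.assoc)
qed

lemma aux_id:
  fixes u v a b :: "real fps"
  assumes "a*u = u - 1" "b*v = v - 1"
  shows "u - a*u*v = 1 - a*b*u*v"
proof -
  have "a*u*v = (u-1)*v" using assms by simp
  hence h1: "a*u*v = u*v - v" by (simp add: algebra_simps)
  have "a*b*u*v = (a*u)*(b*v)" by (simp add: algebra_simps)
  also have "\<dots> = (u-1)*(v-1)" using assms by simp
  also have "\<dots> = 1 + u*v - u - v" by (simp add: algebra_simps)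
  finally have h2: "a*b*u*v = 1 + u*v - u - v" .
  show ?thesis by (simp add: h1 h2)
qed

lemma tt_tele: "tt m b - tt (Suc m) b = ss m b - ss m (Suc b)"
proof (cases b)
  case 0
  have h: "fps_X ^ Suc m * ig (Suc m) = ig (Suc m) - 1" by (rule ig_rec) simp
  have "- (fps_X ^ Suc m * ip (Suc m)) = - (ip m * (fps_X ^ Suc m * ig (Suc m)))"
    by (simp add: ip_Suc algebra_simps del: power_Suc)
  also have "\<dots> = ip m - ip (Suc m)" by (simp only: h ip_Suc) (simp add: algebra_simps)
  finally have "ip m - ip (Suc m) = - (fps_X ^ Suc m * ip (Suc m))" by simp
  thus ?thesis using 0 by (simp add: tt_def ss_def)
next
  case (Suc c)
  define E where "E = Suc c * (Suc c + m)"
  define u v where "u = ig (Suc c)" and "v = ig (Suc (Suc (c + m)))"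
  define Z where "Z = fps_X ^ E * ip c * ip (Suc c + m)"
  have e1: "Suc c * (Suc c + Suc m) = E + Suc c" by (simp add: E_def algebra_simps)
  have e2: "Suc (Suc c) * (Suc (Suc c) + m) = E + Suc c + Suc (Suc (c + m))"
    by (simp add: E_def algebra_simps)
  have i1: "ip (Suc (Suc (c + m))) = ip (Suc (c + m)) * v"
    by (simp add: v_def ip_Suc[of "Suc (c + m)"])
  have L: "tt m b - tt (Suc m) b = Z * (u - fps_X ^ Suc c * u * v)"
    unfolding Suc tt_def e1 E_def[symmetric] Z_def
    by (simp add: ip_Suc[of c] i1 u_def power_add algebra_simps del: ip_Suc)
  have R: "ss m b - ss m (Suc b) = Z * (1 - fps_X ^ Suc c * fps_X ^ Suc (Suc (c + m)) * u * v)"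
    unfolding Suc ss_def e2 E_def[symmetric] Z_def
    by (simp add: ip_Suc[of c] i1 u_def power_add algebra_simps del: ip_Suc)
  have g1: "fps_X ^ Suc c * u = u - 1" unfolding u_def by (rule ig_rec) simp
  have g2: "fps_X ^ Suc (Suc (c + m)) * v = v - 1" unfolding v_def by (rule ig_rec) simp
  have "u - fps_X ^ Suc c * u * v = 1 - fps_X ^ Suc c * fps_X ^ Suc (Suc (c + m)) * u * v"
    by (rule aux_id[OF g1 g2])
  thus ?thesis using L R by simp
qed

lemma Dur_Suc: "Dur m = Dur (Suc m)"
proof (rule fps_ext)
  fix n
  have "Dur m $ n - Dur (Suc m) $ n = (\<Sum>b\<le>n. tt m b - tt (Suc m) b) $ n"
    by (simp add: Dur_def isum_nth' fps_sum_nth sum_subtractf)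
  also have "\<dots> = (\<Sum>b\<le>n. ss m b - ss m (Suc b)) $ n" by (simp add: tt_tele)
  also have "\<dots> = (ss m 0 - ss m (Suc n)) $ n" by (simp add: sum_telescope)
  also have "\<dots> = 0"
  proof -
    have "n < Suc n * (Suc n + m)" by simp
    thus ?thesis by (simp add: ss_def fps_X_power_mult_nth mult.assoc del: mult_Suc mult_Suc_right)
  qed
  finally show "Dur m $ n = Dur (Suc m) $ n" by simp
qed

lemma Dur_add: "Dur m = Dur (m + k)"
  by (induction k) (simp_all add: Dur_Suc[symmetric])

lemma Dur_nth: "Dur m $ n = ip (m + n) $ n"
proof -
  have "Dur m $ n = Dur (m+n) $ n" using Dur_add by simp
  also have "\<dots> = (\<Sum>b\<le>n. tt (m+n) b $ n)" by (simp add: Dur_def isum_nth')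
  also have "\<dots> = tt (m+n) 0 $ n"
  proof -
    have "(\<Sum>b<n. tt (m+n) (Suc b) $ n) = 0"
    proof (rule sum.neutral, rule ballI)
      fix b assume "b \<in> {..<n}"
      have "n < Suc b * (Suc b + (m+n))" by simp
      thus "tt (m+n) (Suc b) $ n = 0"
        by (simp add: tt_def fps_X_power_mult_nth mult.assoc del: mult_Suc mult_Suc_right)
    qed
    thus ?thesis by (simp add: sum.atMost_shift)
  qed
  also have "\<dots> = ip (m+n) $ n" by (simp add: tt_def)
  finally show ?thesis .
qed


definition pc :: "nat \<Rightarrow> nat" where
  "pc n = card {M :: nat multiset. (\<forall>x\<in>#M. 0 < x) \<and> sum_mset M = n}"
definition cnt :: "nat \<Rightarrow> nat \<Rightarrow> nat" where
  "cnt k n = card {M :: nat multiset. set_mset M \<subseteq> {1..k} \<and> sum_mset M = n}"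

lemma mem_le_sum_mset: "x \<in># M \<Longrightarrow> (x::nat) \<le> sum_mset M"
  by (drule multi_member_split) auto

lemma size_le_sum_mset: "(\<forall>x\<in>#M. 0 < x) \<Longrightarrow> size M \<le> sum_mset (M :: nat multiset)"
  by (induction M) auto

lemma finite_cnt_set: "finite {M :: nat multiset. set_mset M \<subseteq> {1..k} \<and> sum_mset M = n}"
proof (rule finite_subset)
  show "{M :: nat multiset. set_mset M \<subseteq> {1..k} \<and> sum_mset M = n} \<subseteq> (\<Union>s\<le>n. multisets_of_size {1..k} s)"
  proof
    fix M :: "nat multiset" assume "M \<in> {M. set_mset M \<subseteq> {1..k} \<and> sum_mset M = n}"
    hence h: "set_mset M \<subseteq> {1..k}" "sum_mset M = n" by auto
    have "\<forall>x\<in>#M. 0 < x" using h(1) by auto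
    hence "size M \<le> n" using size_le_sum_mset[of M] h(2) by simp
    hence "size M \<in> {..n}" by simp
    moreover have "M \<in> multisets_of_size {1..k} (size M)" unfolding multisets_of_size_def using h(1) by blast
    ultimately
    show "M \<in> (\<Union>s\<le>n. multisets_of_size {1..k} s)" by blast
  qed
qed (intro finite_UN_I; simp add: finite_multisets_of_size)

lemma cnt_0: "cnt 0 n = (if n = 0 then 1 else 0)"
proof -
  have "{M :: nat multiset. set_mset M \<subseteq> {1..0} \<and> sum_mset M = n} = (if n = 0 then {{#}} else {})"
    by auto
  thus ?thesis by (simp add: cnt_def)
qed

lemma cnt_Suc: "cnt (Suc k) n = cnt k n + (if Suc k \<le> n then cnt (Suc k) (n - Suc k) else 0)"
proof -
  let ?S = "{M :: nat multiset. set_mset M \<subseteq> {1..Suc k} \<and> sum_mset M = n}"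
  let ?A = "{M :: nat multiset. set_mset M \<subseteq> {1..k} \<and> sum_mset M = n}"
  let ?B = "{M :: nat multiset. set_mset M \<subseteq> {1..Suc k} \<and> sum_mset M = n - Suc k}"
  let ?C = "{M \<in> ?S. Suc k \<in># M}"
  have split: "?S = ?A \<union> ?C"
  proof
    show "?S \<subseteq> ?A \<union> ?C"
    proof
      fix M assume "M \<in> ?S"
      show "M \<in> ?A \<union> ?C"
      proof (cases "Suc k \<in># M")
        case True thus ?thesis using \<open>M \<in> ?S\<close> by simp
      next
        case False
        have "set_mset M \<subseteq> {1..k}"
        proof
          fix x assume "x \<in># M"
          hence "x \<in> {1..Suc k}" "x \<noteq> Suc k" using \<open>M \<in> ?S\<close> False by auto
          thus "x \<in> {1..k}" by auto
        qed
        thus ?thesis using \<open>M \<in> ?S\<close> by simp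
      qed
    qed
  qed auto
  have disj: "?A \<inter> ?C = {}" by auto
  have fA: "finite ?A" by (rule finite_cnt_set)
  have fC: "finite ?C" by (rule finite_subset[OF _ finite_cnt_set[of "Suc k" n]]) blast
  have C_img: "?C = (if Suc k \<le> n then add_mset (Suc k) ` ?B else {})"
  proof (cases "Suc k \<le> n")
    case True
    have "?C = add_mset (Suc k) ` ?B"
    proof
      show "?C \<subseteq> add_mset (Suc k) ` ?B"
      proof
        fix M assume "M \<in> ?C"
        then obtain M' where M': "M = add_mset (Suc k) M'" "set_mset M \<subseteq> {1..Suc k}" "sum_mset M = n"
          by (auto dest: multi_member_split)
        hence "M' \<in> ?B" by auto
        thus "M \<in> add_mset (Suc k) ` ?B" using M' by auto
      qed
      show "add_mset (Suc k) ` ?B \<subseteq> ?C"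
      proof
        fix M assume "M \<in> add_mset (Suc k) ` ?B"
        then obtain M' where "M = add_mset (Suc k) M'" "M' \<in> ?B" by blast
        thus "M \<in> ?C" using True by auto
      qed
    qed
    thus ?thesis using True by simp
  next
    case False
    have "?C = {}"
    proof (rule ccontr)
      assume "?C \<noteq> {}"
      then obtain M where "M \<in> ?C" by blast
      hence "Suc k \<le> n" using mem_le_sum_mset[of "Suc k" M] by auto
      thus False using False by simp
    qed
    thus ?thesis using False by simp
  qed
  have "card ?C = (if Suc k \<le> n then card ?B else 0)"
  proof (cases "Suc k \<le> n")
    case True
    have "inj_on (add_mset (Suc k)) ?B" by (rule inj_onI) simp
    thus ?thesis using True by (simp only: C_img card_image if_True)
  next
    case False thus ?thesis by (simp only: C_img if_False card.empty)
  qed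
  moreover have "card ?S = card ?A + card ?C"
    by (subst split, rule card_Un_disjoint[OF fA fC disj])
  ultimately show ?thesis by (simp add: cnt_def)
qed

lemma cnt_fps: "Abs_fps (\<lambda>n. real (cnt k n)) = ip k"
proof (induction k)
  case 0
  show ?case by (rule fps_ext) (simp add: cnt_0)
next
  case (Suc k)
  let ?C = "Abs_fps (\<lambda>n. real (cnt (Suc k) n))"
  have "?C * (1 - fps_X ^ Suc k) = Abs_fps (\<lambda>n. real (cnt k n))"
  proof (rule fps_ext)
    fix n
    have "(?C * (1 - fps_X ^ Suc k)) $ n = ?C $ n - (fps_X ^ Suc k * ?C) $ n"
      by (simp add: algebra_simps)
    also have "\<dots> = real (cnt k n)"
      by (simp only: fps_X_power_mult_nth fps_nth_Abs_fps cnt_Suc[of k n]) (simp add: not_less)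
    finally show "(?C * (1 - fps_X ^ Suc k)) $ n = Abs_fps (\<lambda>n. real (cnt k n)) $ n" by simp
  qed
  hence h: "?C * (1 - fps_X ^ Suc k) * ig (Suc k) = ip k * ig (Suc k)" using Suc by simp
  have "?C * (1 - fps_X ^ Suc k) * ig (Suc k) = ?C * (ig (Suc k) * (1 - fps_X ^ Suc k))"
    by (simp only: mult.assoc mult.commute[of "1 - fps_X ^ Suc k"])
  also have "\<dots> = ?C" using ig_inv[of "Suc k"] by simp
  finally show ?case using h by (simp only: ip_Suc)
qed

lemma pc_cnt: "n \<le> k \<Longrightarrow> pc n = cnt k n"
proof -
  assume "n \<le> k"
  have "{M :: nat multiset. (\<forall>x\<in>#M. 0 < x) \<and> sum_mset M = n}
      = {M :: nat multiset. set_mset M \<subseteq> {1..k} \<and> sum_mset M = n}"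
  proof (rule Collect_cong, rule iffI)
    fix M :: "nat multiset"
    assume h: "(\<forall>x\<in>#M. 0 < x) \<and> sum_mset M = n"
    have "\<forall>x\<in>#M. x \<le> k" using h mem_le_sum_mset \<open>n \<le> k\<close> by (metis le_trans)
    thus "set_mset M \<subseteq> {1..k} \<and> sum_mset M = n" using h by (auto simp: Suc_le_eq)
  qed auto
  thus ?thesis by (simp add: pc_def cnt_def)
qed

definition PP :: "real fps" where "PP = Abs_fps (\<lambda>n. real (pc n))"

lemma ip_nth_pc: "n \<le> k \<Longrightarrow> ip k $ n = real (pc n)"
  using cnt_fps[of k] pc_cnt[of n k] by (metis fps_nth_Abs_fps)

lemma Dur_PP: "Dur m = PP"
  by (rule fps_ext) (simp add: Dur_nth PP_def ip_nth_pc)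


definition FS :: "nat \<Rightarrow> nat \<Rightarrow> nat \<Rightarrow> nat set set" where
  "FS c k s = {S. finite S \<and> card S = k \<and> (\<forall>x\<in>S. c < x) \<and> \<Sum>S = s}"
definition dd :: "nat \<Rightarrow> nat \<Rightarrow> nat \<Rightarrow> nat" where "dd c k s = card (FS c k s)"

fun tri :: "nat \<Rightarrow> nat" where "tri 0 = 0" | "tri (Suc k) = tri k + Suc k"

lemma elem_le_sum: "finite S \<Longrightarrow> x \<in> S \<Longrightarrow> x \<le> \<Sum>(S :: nat set)"
  by (rule member_le_sum) auto

lemma card_le_sum: "finite S \<Longrightarrow> \<forall>x\<in>S. 0 < x \<Longrightarrow> card S \<le> \<Sum>(S :: nat set)"
proof -
  assume "finite S" "\<forall>x\<in>S. 0 < x"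
  hence "(\<Sum>x\<in>S. (1::nat)) \<le> (\<Sum>x\<in>S. x)" by (intro sum_mono) auto
  thus ?thesis by simp
qed

lemma finite_FS: "finite (FS c k s)"
proof (rule finite_subset)
  show "FS c k s \<subseteq> Pow {..s}" by (auto simp: FS_def intro: elem_le_sum)
qed auto

definition sh :: "nat \<Rightarrow> nat set \<Rightarrow> nat set" where "sh c T = (\<lambda>x. x + c) ` T"
definition unsh :: "nat \<Rightarrow> nat set \<Rightarrow> nat set" where "unsh c S = (\<lambda>x. x - c) ` S"

lemma inj_add: "inj_on (\<lambda>x::nat. x + c) T" by (auto intro: inj_onI)
lemma card_sh: "card (sh c T) = card T" by (simp add: sh_def card_image inj_add)
lemma finite_sh: "finite (sh c T) = finite T" by (simp add: sh_def finite_image_iff inj_add)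
lemma sum_sh: "finite T \<Longrightarrow> \<Sum>(sh c T) = \<Sum>T + c * card T"
  by (simp add: sh_def sum.reindex inj_add sum.distrib mult.commute)
lemma unsh_sh: "unsh c (sh c T) = T" by (simp add: sh_def unsh_def image_image)
lemma sh_unsh: "\<forall>x\<in>S. c \<le> x \<Longrightarrow> sh c (unsh c S) = S"
  by (simp add: sh_def unsh_def image_image cong: image_cong)
lemma finite_unsh: "finite S \<Longrightarrow> finite (unsh c S)" by (simp add: unsh_def)
lemma mem_sh: "y \<in> sh c T \<longleftrightarrow> c \<le> y \<and> y - c \<in> T"
proof
  assume "c \<le> y \<and> y - c \<in> T"
  hence "y = (y - c) + c" "y - c \<in> T" by auto
  thus "y \<in> sh c T" unfolding sh_def by blast
qed (auto simp: sh_def)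

lemma FS_shift:
  "dd c k s = (if c * k \<le> s then dd 0 k (s - c * k) else 0)"
proof (cases "c * k \<le> s")
  case True
  have "bij_betw (unsh c) (FS c k s) (FS 0 k (s - c * k))"
  proof (rule bij_betwI[where g = "sh c"])
    show "unsh c \<in> FS c k s \<rightarrow> FS 0 k (s - c * k)"
    proof
      fix S assume S: "S \<in> FS c k s"
      hence le: "\<forall>x\<in>S. c \<le> x" and fS: "finite S" by (auto simp: FS_def)
      have e: "sh c (unsh c S) = S" using sh_unsh[OF le] .
      have fu: "finite (unsh c S)" using fS by (rule finite_unsh)
      have "card (unsh c S) = k" using S e card_sh[of c "unsh c S"] by (simp add: FS_def)
      moreover have "\<Sum>(unsh c S) = s - c * k"
        using S e sum_sh[OF fu, of c] card_sh[of c "unsh c S"] by (simp add: FS_def)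
      moreover have "\<forall>x\<in>unsh c S. 0 < x" using S by (auto simp: FS_def unsh_def)
      ultimately show "unsh c S \<in> FS 0 k (s - c * k)" using fu by (simp add: FS_def)
    qed
    show "sh c \<in> FS 0 k (s - c * k) \<rightarrow> FS c k s"
    proof
      fix T assume T: "T \<in> FS 0 k (s - c * k)"
      hence fT: "finite T" by (simp add: FS_def)
      show "sh c T \<in> FS c k s"
        using T True sum_sh[OF fT, of c] card_sh[of c T] finite_sh[of c T]
        by (auto simp: FS_def sh_def)
    qed
    show "\<And>S. S \<in> FS c k s \<Longrightarrow> sh c (unsh c S) = S"
      by (rule sh_unsh) (auto simp: FS_def)
    show "\<And>T. T \<in> FS 0 k (s - c * k) \<Longrightarrow> unsh c (sh c T) = T" by (rule unsh_sh)
  qed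
  thus ?thesis using True by (simp add: dd_def bij_betw_same_card)
next
  case False
  have "FS c k s = {}"
  proof (rule ccontr)
    assume "FS c k s \<noteq> {}"
    then obtain S where S: "S \<in> FS c k s" by blast
    hence fS: "finite S" and le: "\<forall>x\<in>S. c \<le> x" by (auto simp: FS_def)
    have "\<Sum>S = \<Sum>(unsh c S) + c * card (unsh c S)"
      using sum_sh[of "unsh c S" c] finite_unsh[OF fS] sh_unsh[OF le] by simp
    moreover have "card (unsh c S) = card S"
      using card_sh[of c "unsh c S"] sh_unsh[OF le] by simp
    moreover have "\<Sum>S = s" "card S = k" using S by (auto simp: FS_def)
    ultimately have "s = \<Sum>(unsh c S) + c * k" by simp
    hence "c * k \<le> s" by simp
    thus False using False by simp
  qed
  thus ?thesis using False by (simp add: dd_def)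
qed

lemma dd0_0: "dd 0 0 s = (if s = 0 then 1 else 0)"
proof -
  have "FS 0 0 s = (if s = 0 then {{}} else {})" by (auto simp: FS_def)
  thus ?thesis by (simp add: dd_def)
qed

lemma dd0_Suc:
  "dd 0 (Suc k) n = (if Suc k \<le> n then dd 0 k (n - Suc k) + dd 0 (Suc k) (n - Suc k) else 0)"
proof (cases "Suc k \<le> n")
  case False
  have "FS 0 (Suc k) n = {}"
  proof (rule ccontr)
    assume "FS 0 (Suc k) n \<noteq> {}"
    then obtain S where S: "S \<in> FS 0 (Suc k) n" by blast
    hence "card S \<le> \<Sum>S" by (intro card_le_sum) (auto simp: FS_def)
    thus False using S False by (simp add: FS_def)
  qed
  thus ?thesis using False by (simp add: dd_def)
next
  case True
  let ?S = "FS 0 (Suc k) n"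
  let ?A = "{S \<in> ?S. 1 \<in> S}" and ?B = "{S \<in> ?S. 1 \<notin> S}"
  have bA: "bij_betw (\<lambda>S. unsh 1 (S - {1})) ?A (FS 0 k (n - Suc k))"
  proof (rule bij_betwI[where g = "\<lambda>T. insert 1 (sh 1 T)"])
    show "(\<lambda>S. unsh 1 (S - {1})) \<in> ?A \<rightarrow> FS 0 k (n - Suc k)"
    proof
      fix S assume S: "S \<in> ?A"
      let ?R = "S - {1}"
      have fR: "finite ?R" and le: "\<forall>x\<in>?R. 1 \<le> x" using S by (auto simp: FS_def)
      have e: "sh 1 (unsh 1 ?R) = ?R" using sh_unsh[OF le] .
      have fu: "finite (unsh 1 ?R)" using fR by (rule finite_unsh)
      have cR: "card ?R = k" using S by (simp add: FS_def)
      have sR: "\<Sum>?R = n - 1" using S by (simp add: FS_def sum_diff1_nat)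
      have "card (unsh 1 ?R) = k" using cR e card_sh[of 1 "unsh 1 ?R"] by simp
      moreover have "\<Sum>(unsh 1 ?R) = n - Suc k"
        using sR e sum_sh[OF fu, of 1] card_sh[of 1 "unsh 1 ?R"] cR by simp
      moreover have "\<forall>x\<in>unsh 1 ?R. 0 < x"
      proof
        fix y assume "y \<in> unsh 1 ?R"
        then obtain x where "x \<in> ?R" "y = x - 1" by (auto simp: unsh_def)
        moreover have "0 < x" using \<open>x \<in> ?R\<close> S by (auto simp: FS_def)
        ultimately show "0 < y" by simp
      qed
      ultimately show "unsh 1 ?R \<in> FS 0 k (n - Suc k)" using fu by (simp add: FS_def)
    qed
    show "(\<lambda>T. insert 1 (sh 1 T)) \<in> FS 0 k (n - Suc k) \<rightarrow> ?A"
    proof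
      fix T assume T: "T \<in> FS 0 k (n - Suc k)"
      hence fT: "finite T" and pos: "\<forall>x\<in>T. 0 < x" by (auto simp: FS_def)
      have n1: "1 \<notin> sh 1 T" using pos by (auto simp: mem_sh)
      have "card (insert 1 (sh 1 T)) = Suc k"
        using n1 card_sh[of 1 T] T finite_sh[of 1 T] fT by (simp add: FS_def)
      moreover have "\<Sum>(insert 1 (sh 1 T)) = n"
        using n1 sum_sh[OF fT, of 1] T finite_sh[of 1 T] fT True by (simp add: FS_def)
      moreover have "\<forall>x\<in>insert 1 (sh 1 T). 0 < x" by (auto simp: mem_sh)
      ultimately show "insert 1 (sh 1 T) \<in> ?A" using finite_sh[of 1 T] fT by (simp add: FS_def)
    qed
    show "\<And>S. S \<in> ?A \<Longrightarrow> insert 1 (sh 1 (unsh 1 (S - {1}))) = S"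
    proof -
      fix S assume S: "S \<in> ?A"
      have "\<forall>x\<in>S - {1}. 1 \<le> x" using S by (auto simp: FS_def)
      thus "insert 1 (sh 1 (unsh 1 (S - {1}))) = S" using S by (simp add: sh_unsh insert_absorb)
    qed
    show "\<And>T. T \<in> FS 0 k (n - Suc k) \<Longrightarrow> unsh 1 (insert 1 (sh 1 T) - {1}) = T"
    proof -
      fix T assume T: "T \<in> FS 0 k (n - Suc k)"
      have "1 \<notin> sh 1 T" using T by (auto simp: mem_sh FS_def)
      thus "unsh 1 (insert 1 (sh 1 T) - {1}) = T" by (simp add: unsh_sh)
    qed
  qed
  have bB: "bij_betw (unsh 1) ?B (FS 0 (Suc k) (n - Suc k))"
  proof (rule bij_betwI[where g = "sh 1"])
    show "unsh 1 \<in> ?B \<rightarrow> FS 0 (Suc k) (n - Suc k)"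
    proof
      fix S assume S: "S \<in> ?B"
      have fS: "finite S" and le: "\<forall>x\<in>S. 1 \<le> x" using S by (auto simp: FS_def)
      have e: "sh 1 (unsh 1 S) = S" using sh_unsh[OF le] .
      have fu: "finite (unsh 1 S)" using fS by (rule finite_unsh)
      have "card (unsh 1 S) = Suc k" using S e card_sh[of 1 "unsh 1 S"] by (simp add: FS_def)
      moreover have "\<Sum>(unsh 1 S) = n - Suc k"
        using S e sum_sh[OF fu, of 1] card_sh[of 1 "unsh 1 S"] by (simp add: FS_def)
      moreover have "\<forall>x\<in>unsh 1 S. 0 < x"
      proof
        fix y assume "y \<in> unsh 1 S"
        then obtain x where "x \<in> S" "y = x - 1" by (auto simp: unsh_def)
        moreover have "0 < x" "x \<noteq> 1" using \<open>x \<in> S\<close> S by (auto simp: FS_def)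
        ultimately show "0 < y" by simp
      qed
      ultimately show "unsh 1 S \<in> FS 0 (Suc k) (n - Suc k)" using fu by (simp add: FS_def)
    qed
    show "sh 1 \<in> FS 0 (Suc k) (n - Suc k) \<rightarrow> ?B"
    proof
      fix T assume T: "T \<in> FS 0 (Suc k) (n - Suc k)"
      hence fT: "finite T" and pos: "\<forall>x\<in>T. 0 < x" by (auto simp: FS_def)
      have "1 \<notin> sh 1 T" using pos by (auto simp: mem_sh)
      moreover have "\<forall>x\<in>sh 1 T. 0 < x" by (auto simp: mem_sh)
      ultimately show "sh 1 T \<in> ?B"
        using T True sum_sh[OF fT, of 1] card_sh[of 1 T] finite_sh[of 1 T] fT by (simp add: FS_def)
    qed
    show "\<And>S. S \<in> ?B \<Longrightarrow> sh 1 (unsh 1 S) = S" by (rule sh_unsh) (auto simp: FS_def Suc_le_eq)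
    show "\<And>T. T \<in> FS 0 (Suc k) (n - Suc k) \<Longrightarrow> unsh 1 (sh 1 T) = T" by (rule unsh_sh)
  qed
  have "card ?S = card ?A + card ?B"
  proof -
    have eq: "?S = ?A \<union> ?B" by blast
    have "finite ?A" "finite ?B" using finite_FS[of 0 "Suc k" n] by auto
    hence "card (?A \<union> ?B) = card ?A + card ?B" by (rule card_Un_disjoint) blast
    thus ?thesis using eq by simp
  qed
  thus ?thesis using True bij_betw_same_card[OF bA] bij_betw_same_card[OF bB] by (simp add: dd_def)
qed

definition DD :: "nat \<Rightarrow> nat \<Rightarrow> real fps" where "DD c k = Abs_fps (\<lambda>s. real (dd c k s))"

lemma DD0: "DD 0 k = fps_X ^ tri k * ip k"
proof (induction k)
  case 0
  show ?case by (rule fps_ext) (simp add: DD_def dd0_0)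
next
  case (Suc k)
  let ?E = "DD 0 (Suc k)"
  have "?E = fps_X ^ Suc k * (DD 0 k + ?E)"
  proof (rule fps_ext)
    fix n
    show "?E $ n = (fps_X ^ Suc k * (DD 0 k + ?E)) $ n"
      by (simp only: fps_X_power_mult_nth DD_def fps_add_nth fps_nth_Abs_fps dd0_Suc[of k n])
         (simp add: not_less)
  qed
  hence "?E * (1 - fps_X ^ Suc k) = fps_X ^ Suc k * DD 0 k" by (simp add: algebra_simps)
  hence h: "?E * (1 - fps_X ^ Suc k) * ig (Suc k) = fps_X ^ Suc k * DD 0 k * ig (Suc k)" by simp
  have "?E * (1 - fps_X ^ Suc k) * ig (Suc k) = ?E * (ig (Suc k) * (1 - fps_X ^ Suc k))"
    by (simp only: mult.assoc mult.commute[of "1 - fps_X ^ Suc k"])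
  also have "\<dots> = ?E" using ig_inv[of "Suc k"] by simp
  finally have e2: "?E * (1 - fps_X ^ Suc k) * ig (Suc k) = ?E" .
  have "?E = fps_X ^ Suc k * DD 0 k * ig (Suc k)" using e2[symmetric] h by (rule trans)
  also have "\<dots> = fps_X ^ tri (Suc k) * ip (Suc k)"
    by (simp only: Suc ip_Suc tri.simps power_add) (simp add: algebra_simps)
  finally show ?case .
qed

lemma DDc: "DD c k = fps_X ^ (c * k) * DD 0 k"
  by (rule fps_ext) (simp add: DD_def fps_X_power_mult_nth FS_shift[of c k] not_less)


definition trip :: "int \<Rightarrow> nat \<Rightarrow> (nat set \<times> nat \<times> nat set) set" where
  "trip l n = {(A,c,B). finite A \<and> finite B \<and> (\<forall>x\<in>A. c<x) \<and> (\<forall>x\<in>B. c<x) \<and>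
     c + \<Sum>A + \<Sum>B = n \<and> int (card B) - int (card A) = l}"

lemma trip_sym: "card (trip (-l) n) = card (trip l n)"
proof -
  have "bij_betw (\<lambda>(A,c,B). (B,c,A)) (trip (-l) n) (trip l n)"
    by (rule bij_betwI[where g = "\<lambda>(A,c,B). (B,c,A)"]) (auto simp: trip_def)
  thus ?thesis by (rule bij_betw_same_card)
qed

definition blk :: "nat \<Rightarrow> nat \<Rightarrow> nat \<Rightarrow> nat \<Rightarrow> nat \<Rightarrow> (nat set \<times> nat \<times> nat set) set" where
  "blk l n c a i = (if c + i \<le> n then (\<lambda>(A,B). (A,c,B)) ` (FS c a i \<times> FS c (a+l) (n-c-i)) else {})"

lemma card_blk: "card (blk l n c a i) = (if c + i \<le> n then dd c a i * dd c (a+l) (n-c-i) else 0)"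
proof -
  have "inj_on (\<lambda>(A,B). (A,c,B)) (FS c a i \<times> FS c (a+l) (n-c-i))"
    by (auto intro: inj_onI)
  thus ?thesis by (simp add: blk_def card_image card_cartesian_product dd_def)
qed

lemma trip_UN: "trip (int l) n = (\<Union>x\<in>{..n} \<times> {..n} \<times> {..n}. blk l n (fst x) (fst (snd x)) (snd (snd x)))"
proof
  show "trip (int l) n \<subseteq> (\<Union>x\<in>{..n} \<times> {..n} \<times> {..n}. blk l n (fst x) (fst (snd x)) (snd (snd x)))"
  proof
    fix t assume t: "t \<in> trip (int l) n"
    then obtain A c B where tt: "t = (A,c,B)" by (cases t) auto
    have fA: "finite A" and fB: "finite B" and pA: "\<forall>x\<in>A. c<x" and pB: "\<forall>x\<in>B. c<x"
      and s: "c + \<Sum>A + \<Sum>B = n" and r: "int (card B) - int (card A) = int l"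
      using t tt by (auto simp: trip_def)
    have cB: "card B = card A + l" using r by linarith
    have "\<forall>x\<in>A. 0 < x" using pA by auto
    hence "card A \<le> \<Sum>A" using card_le_sum[OF fA] by blast
    hence ca: "card A \<le> n" using s by linarith
    have "A \<in> FS c (card A) (\<Sum>A)" using fA pA by (simp add: FS_def)
    moreover have "B \<in> FS c (card A + l) (n - c - \<Sum>A)" using fB pB s cB by (auto simp: FS_def)
    ultimately have "t \<in> blk l n c (card A) (\<Sum>A)" using s tt by (auto simp: blk_def)
    moreover have "(c, card A, \<Sum>A) \<in> {..n} \<times> {..n} \<times> {..n}" using s ca by auto
    ultimately show "t \<in> (\<Union>x\<in>{..n} \<times> {..n} \<times> {..n}. blk l n (fst x) (fst (snd x)) (snd (snd x)))"
      by force
  qed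
  show "(\<Union>x\<in>{..n} \<times> {..n} \<times> {..n}. blk l n (fst x) (fst (snd x)) (snd (snd x))) \<subseteq> trip (int l) n"
    by (auto simp: blk_def FS_def trip_def split: if_splits)
qed

lemma card_trip: "card (trip (int l) n) =
   (\<Sum>c\<le>n. \<Sum>a\<le>n. \<Sum>i\<le>n. if c + i \<le> n then dd c a i * dd c (a+l) (n-c-i) else 0)"
proof -
  let ?I = "{..n} \<times> {..n} \<times> {..n}"
  let ?f = "\<lambda>x. blk l n (fst x) (fst (snd x)) (snd (snd x))"
  have fin: "\<forall>x\<in>?I. finite (?f x)" by (auto simp: blk_def finite_FS)
  have disj: "\<forall>x\<in>?I. \<forall>y\<in>?I. x \<noteq> y \<longrightarrow> ?f x \<inter> ?f y = {}"
    by (auto simp: blk_def FS_def split: if_splits)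
  have "card (trip (int l) n) = (\<Sum>x\<in>?I. card (?f x))"
    unfolding trip_UN by (rule card_UN_disjoint) (use fin disj in auto)
  also have "\<dots> = (\<Sum>c\<le>n. \<Sum>a\<le>n. \<Sum>i\<le>n. card (blk l n c a i))"
    by (simp add: sum.cartesian_product split_beta)
  finally show ?thesis by (simp add: card_blk)
qed


lemma transp_gt: "transp ((>) :: nat \<Rightarrow> nat \<Rightarrow> bool)" by (auto intro: transpI)
lemma transp_lt: "transp ((<) :: nat \<Rightarrow> nat \<Rightarrow> bool)" by (auto intro: transpI)

lemma take_part:
  fixes L :: "nat list"
  assumes "k \<le> length L"
  shows "sorted_wrt (>) (take k L) \<longleftrightarrow> (\<forall>i. 1 \<le> i \<and> i < k \<longrightarrow> L ! (i - 1) > L ! i)"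
proof -
  have "sorted_wrt (>) (take k L) \<longleftrightarrow> (\<forall>i. Suc i < length (take k L) \<longrightarrow> take k L ! i > take k L ! Suc i)"
    by (rule sorted_wrt_iff_nth_Suc_transp[OF transp_gt])
  also have "\<dots> \<longleftrightarrow> (\<forall>i. Suc i < k \<longrightarrow> L ! i > L ! Suc i)"
    using assms by (auto simp: min_def)
  also have "\<dots> \<longleftrightarrow> (\<forall>i. 1 \<le> i \<and> i < k \<longrightarrow> L ! (i - 1) > L ! i)"
  proof
    assume h: "\<forall>i. Suc i < k \<longrightarrow> L ! i > L ! Suc i"
    show "\<forall>i. 1 \<le> i \<and> i < k \<longrightarrow> L ! (i - 1) > L ! i"
    proof (intro allI impI)
      fix i assume "1 \<le> i \<and> i < k"
      then obtain j where "i = Suc j" by (cases i) auto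
      thus "L ! (i - 1) > L ! i" using h \<open>1 \<le> i \<and> i < k\<close> by auto
    qed
  next
    assume h: "\<forall>i. 1 \<le> i \<and> i < k \<longrightarrow> L ! (i - 1) > L ! i"
    show "\<forall>i. Suc i < k \<longrightarrow> L ! i > L ! Suc i"
      using h by (metis diff_Suc_1 le_add1 plus_1_eq_Suc)
  qed
  finally show ?thesis .
qed

lemma drop_part:
  fixes L :: "nat list"
  assumes "1 \<le> k" "k \<le> length L"
  shows "sorted_wrt (<) (drop (k - 1) L) \<longleftrightarrow> (\<forall>i. k \<le> i \<and> i < length L \<longrightarrow> L ! (i - 1) < L ! i)"
proof -
  have "sorted_wrt (<) (drop (k - 1) L) \<longleftrightarrow>
        (\<forall>i. Suc i < length (drop (k - 1) L) \<longrightarrow> drop (k - 1) L ! i < drop (k - 1) L ! Suc i)"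
    by (rule sorted_wrt_iff_nth_Suc_transp[OF transp_lt])
  also have "\<dots> \<longleftrightarrow>
        (\<forall>i. Suc i < length L - (k - 1) \<longrightarrow> L ! (k - 1 + i) < L ! (k - 1 + Suc i))"
    using assms by (simp del: add_Suc_right)
  also have "\<dots> \<longleftrightarrow> (\<forall>i. k \<le> i \<and> i < length L \<longrightarrow> L ! (i - 1) < L ! i)"
  proof
    assume h: "\<forall>i. Suc i < length L - (k - 1) \<longrightarrow> L ! (k - 1 + i) < L ! (k - 1 + Suc i)"
    show "\<forall>i. k \<le> i \<and> i < length L \<longrightarrow> L ! (i - 1) < L ! i"
    proof (intro allI impI)
      fix i assume hi: "k \<le> i \<and> i < length L"
      have "Suc (i - k) < length L - (k - 1)" using hi assms by linarith
      hence "L ! (k - 1 + (i - k)) < L ! (k - 1 + Suc (i - k))" using h by blast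
      moreover have "k - 1 + (i - k) = i - 1" "k - 1 + Suc (i - k) = i" using hi assms by linarith+
      ultimately show "L ! (i - 1) < L ! i" by simp
    qed
  next
    assume h: "\<forall>i. k \<le> i \<and> i < length L \<longrightarrow> L ! (i - 1) < L ! i"
    show "\<forall>i. Suc i < length L - (k - 1) \<longrightarrow> L ! (k - 1 + i) < L ! (k - 1 + Suc i)"
    proof (intro allI impI)
      fix i assume hi: "Suc i < length L - (k - 1)"
      have "k \<le> k - 1 + Suc i \<and> k - 1 + Suc i < length L" using hi assms by linarith
      hence "L ! (k - 1 + Suc i - 1) < L ! (k - 1 + Suc i)" using h by blast
      moreover have "k - 1 + Suc i - 1 = k - 1 + i" using assms by linarith
      ultimately show "L ! (k - 1 + i) < L ! (k - 1 + Suc i)" by simp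
    qed
  qed
  finally show ?thesis .
qed

lemma sca_iff: "strongly_concave_at L k \<longleftrightarrow>
   1 \<le> k \<and> k \<le> length L \<and> sorted_wrt (>) (take k L) \<and> sorted_wrt (<) (drop (k - 1) L)"
  unfolding strongly_concave_at_def using take_part drop_part by blast


definition mk :: "nat set \<times> nat \<times> nat set \<Rightarrow> nat list" where
  "mk t = (case t of (A,c,B) \<Rightarrow> rev (sorted_list_of_set A) @ c # sorted_list_of_set B)"

definition LS :: "int \<Rightarrow> nat \<Rightarrow> nat list set" where
  "LS m n = {c :: nat list. sum_list c = n \<and>
              (\<exists>k. strongly_concave_at c k \<and> int (length c) - 2 * int k + 1 = m)}"

lemma decomp_unique:
  fixes xs ys xs' ys' :: "nat list"
  assumes e: "xs @ c # ys = xs' @ c' # ys'"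
    and h1: "\<forall>x\<in>set xs \<union> set ys. c < x" and h2: "\<forall>x\<in>set xs' \<union> set ys'. c' < x"
  shows "xs = xs' \<and> c = c' \<and> ys = ys'"
proof -
  have "c' \<in> set (xs @ c # ys)" using e by simp
  moreover have "\<forall>x\<in>set (xs @ c # ys). c \<le> x" using h1 by (auto intro: less_imp_le)
  ultimately have le1: "c \<le> c'" by blast
  have "c \<in> set (xs' @ c' # ys')" using e[symmetric] by simp
  moreover have "\<forall>x\<in>set (xs' @ c' # ys'). c' \<le> x" using h2 by (auto intro: less_imp_le)
  ultimately have "c' \<le> c" by blast
  hence cc: "c = c'" using le1 by simp
  have len: "length xs = length xs'"
  proof (rule ccontr)
    assume "length xs \<noteq> length xs'"
    hence "length xs < length xs' \<or> length xs' < length xs" by arith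
    thus False
    proof
      assume lt: "length xs < length xs'"
      have "c = (xs @ c # ys) ! length xs" by simp
      also have "\<dots> = (xs' @ c' # ys') ! length xs" using e by simp
      also have "\<dots> = xs' ! length xs" using lt by (simp add: nth_append)
      finally have ce: "c = xs' ! length xs" .
      have "xs' ! length xs \<in> set xs'" using lt by simp
      thus False using ce h2 cc by auto
    next
      assume lt: "length xs' < length xs"
      have "c' = (xs' @ c' # ys') ! length xs'" by simp
      also have "\<dots> = (xs @ c # ys) ! length xs'" using e by simp
      also have "\<dots> = xs ! length xs'" using lt by (simp add: nth_append)
      finally have ce: "c' = xs ! length xs'" .
      have "xs ! length xs' \<in> set xs" using lt by simp
      thus False using ce h1 cc by auto
    qed
  qed
  thus ?thesis using e cc by simp
qed

lemma rev_sorted_set: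
  fixes xs :: "nat list"
  assumes "sorted_wrt (>) xs" shows "rev (sorted_list_of_set (set xs)) = xs"
proof -
  have "sorted_wrt (<) (rev xs)" using assms by (simp add: sorted_wrt_rev)
  hence "sorted_list_of_set (set (rev xs)) = rev xs"
    by (simp add: strict_sorted_iff sorted_list_of_set.idem_if_sorted_distinct del: set_rev)
  thus ?thesis by simp
qed

lemma mk_in:
  assumes t: "t \<in> trip l n" shows "mk t \<in> LS l n"
proof -
  obtain A c B where tt: "t = (A,c,B)" by (cases t) auto
  have fA: "finite A" and fB: "finite B" and pA: "\<forall>x\<in>A. c<x" and pB: "\<forall>x\<in>B. c<x"
    and s: "c + \<Sum>A + \<Sum>B = n" and r: "int (card B) - int (card A) = l"
    using t tt by (auto simp: trip_def)
  define xs where "xs = rev (sorted_list_of_set A)"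
  define ys where "ys = sorted_list_of_set B"
  have L: "mk t = xs @ c # ys" by (simp add: mk_def tt xs_def ys_def)
  have lx: "length xs = card A" and ly: "length ys = card B" by (simp_all add: xs_def ys_def)
  have sx: "set xs = A" and sy: "set ys = B" using fA fB by (simp_all add: xs_def ys_def)
  have dx: "distinct xs" and dy: "distinct ys" by (simp_all add: xs_def ys_def)
  have ox: "sorted_wrt (>) xs"
    using strict_sorted_list_of_set[of A] by (simp add: xs_def sorted_wrt_rev)
  have oy: "sorted_wrt (<) ys" by (simp add: ys_def)
  let ?k = "Suc (card A)"
  have tk: "take ?k (mk t) = xs @ [c]" using lx by (simp add: L)
  have dk: "drop (?k - 1) (mk t) = c # ys" using lx by (simp add: L)
  have "strongly_concave_at (mk t) ?k"
    unfolding sca_iff tk dk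
    using ox oy pA pB sx sy lx by (auto simp: L sorted_wrt_append)
  moreover have "int (length (mk t)) - 2 * int ?k + 1 = l" using lx ly r by (simp add: L)
  moreover have "sum_list (mk t) = n"
    using s dx dy sx sy by (simp add: L distinct_sum_list_conv_Sum)
  ultimately show ?thesis unfolding LS_def by blast
qed

lemma mk_inj: "inj_on mk (trip l n)"
proof (rule inj_onI)
  fix t1 t2 assume t1: "t1 \<in> trip l n" and t2: "t2 \<in> trip l n" and e: "mk t1 = mk t2"
  obtain A c B where tt1: "t1 = (A,c,B)" by (cases t1) auto
  obtain A' c' B' where tt2: "t2 = (A',c',B')" by (cases t2) auto
  have fA: "finite A" "finite B" "finite A'" "finite B'"
    using t1 t2 tt1 tt2 by (auto simp: trip_def)
  have h1: "\<forall>x\<in>set (rev (sorted_list_of_set A)) \<union> set (sorted_list_of_set B). c < x"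
    using t1 tt1 fA by (auto simp: trip_def)
  have h2: "\<forall>x\<in>set (rev (sorted_list_of_set A')) \<union> set (sorted_list_of_set B'). c' < x"
    using t2 tt2 fA by (auto simp: trip_def)
  have "rev (sorted_list_of_set A) = rev (sorted_list_of_set A') \<and> c = c' \<and>
        sorted_list_of_set B = sorted_list_of_set B'"
    by (rule decomp_unique[OF _ h1 h2]) (use e tt1 tt2 in \<open>simp add: mk_def\<close>)
  hence "A = A'" "c = c'" "B = B'"
    using fA by (metis set_rev sorted_list_of_set.set_sorted_key_list_of_set)+
  thus "t1 = t2" using tt1 tt2 by simp
qed

lemma mk_surj: assumes L: "L \<in> LS l n" shows "\<exists>t\<in>trip l n. L = mk t"
proof -
  obtain k where sc: "strongly_concave_at L k" and r: "int (length L) - 2 * int k + 1 = l"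
    and s: "sum_list L = n" using L by (auto simp: LS_def)
  have k1: "1 \<le> k" and kl: "k \<le> length L" and o1: "sorted_wrt (>) (take k L)"
    and o2: "sorted_wrt (<) (drop (k - 1) L)" using sc by (auto simp: sca_iff)
  define j where "j = k - 1"
  have jl: "j < length L" and kj: "k = Suc j" using k1 kl by (auto simp: j_def)
  define xs where "xs = take j L"
  define c where "c = L ! j"
  define ys where "ys = drop k L"
  have tk: "take k L = xs @ [c]" using jl by (simp add: kj xs_def c_def take_Suc_conv_app_nth)
  have dk: "drop j L = c # ys" using jl by (simp add: kj ys_def c_def Cons_nth_drop_Suc)
  have LL: "L = xs @ c # ys"
    using dk by (metis append_take_drop_id xs_def)
  have ox: "sorted_wrt (>) xs" and px: "\<forall>x\<in>set xs. c < x" using o1 by (auto simp: tk sorted_wrt_append)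
  have "drop (k - 1) L = c # ys" using dk by (simp add: j_def)
  hence oy: "sorted_wrt (<) ys" and py: "\<forall>x\<in>set ys. c < x" using o2 by auto
  have dx: "distinct xs" using ox by (metis distinct_rev sorted_wrt_rev strict_sorted_iff)
  have dy: "distinct ys" using oy by (simp add: strict_sorted_iff)
  have e1: "rev (sorted_list_of_set (set xs)) = xs" by (rule rev_sorted_set[OF ox])
  have e2: "sorted_list_of_set (set ys) = ys"
    using oy by (simp add: strict_sorted_iff sorted_list_of_set.idem_if_sorted_distinct)
  have lx: "length xs = j" using jl by (simp add: xs_def)
  have ly: "length ys = length L - k" by (simp add: ys_def)
  have cx: "card (set xs) = j" using dx lx by (simp add: distinct_card)
  have cy: "card (set ys) = length L - k" using dy ly by (simp add: distinct_card)
  have "(set xs, c, set ys) \<in> trip l n"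
    unfolding trip_def
    using px py cx cy r s kl kj dx dy LL by (auto simp: distinct_sum_list_conv_Sum)
  moreover have "L = mk (set xs, c, set ys)" using e1 e2 LL by (simp add: mk_def)
  ultimately show ?thesis by blast
qed

lemma LS_eq: "LS l n = mk ` trip l n"
  using mk_in mk_surj by blast

lemma Vd_trip: "0 \<le> n \<Longrightarrow> Vd l n = int (card (trip l (nat n)))"
proof -
  assume "0 \<le> n"
  have "Vd l n = int (card (LS l (nat n)))" using \<open>0 \<le> n\<close> by (simp add: Vd_def LS_def)
  also have "\<dots> = int (card (trip l (nat n)))" by (simp add: LS_eq card_image mk_inj)
  finally show ?thesis .
qed


definition term1 :: "nat \<Rightarrow> nat \<Rightarrow> real fps" where
  "term1 l b = fps_X ^ (b*(b+l+1)) * ip b * ip (b+l) * ig (2*b+l+1)"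
definition term2 :: "nat \<Rightarrow> nat \<Rightarrow> real fps" where
  "term2 l b = fps_X ^ (b*(b+l+2)) * ip b * ip (b+l) * ig (2*b+l+1)"
definition K1 :: "nat \<Rightarrow> real fps" where "K1 l = isum (term1 l)"
definition K2 :: "nat \<Rightarrow> real fps" where "K2 l = isum (term2 l)"

lemma lowo_term1: "lowo (term1 l)"
proof -
  have "lowo (\<lambda>b. fps_X ^ (b*(b+l+1)) * (ip b * ip (b+l) * ig (2*b+l+1)))"
    by (rule lowo_X) (simp add: le_square trans_le_add1)
  thus ?thesis unfolding term1_def by (simp add: mult.assoc)
qed
lemma lowo_term2: "lowo (term2 l)"
proof -
  have "lowo (\<lambda>b. fps_X ^ (b*(b+l+2)) * (ip b * ip (b+l) * ig (2*b+l+1)))"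
    by (rule lowo_X) (simp add: le_square trans_le_add1)
  thus ?thesis unfolding term2_def by (simp add: mult.assoc)
qed

lemma term_0: "term1 l 0 = tt (l+1) 0" "term2 l 0 = tt (l+1) 0"
  by (simp_all add: term1_def term2_def tt_def ip_Suc[of l, symmetric])

lemma comb1:
  fixes u v w a :: "real fps"
  assumes "u*v = w*(u+v-1)" "a*u = u-1" shows "a*u*w + v*w = u*v"
proof -
  have "a*u*w + v*w = w*(a*u + v)" by (simp add: algebra_simps)
  also have "\<dots> = w*(u+v-1)" using assms(2) by simp
  finally show ?thesis using assms(1) by simp
qed
lemma comb2:
  fixes u v w a :: "real fps"
  assumes "u*v = w*(u+v-1)" "a*v = v-1" shows "u*w + a*v*w = u*v"
proof -
  have "u*w + a*v*w = w*(u + a*v)" by (simp add: algebra_simps)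
  also have "\<dots> = w*(u+v-1)" using assms(2) by simp
  finally show ?thesis using assms(1) by simp
qed

lemma T2_S: "term2 l (Suc b) + fps_X ^ (l+2) * term1 (l+2) b = tt (l+1) (Suc b)"
proof -
  define E where "E = Suc b * (b + l + 2)"
  define u v w where "u = ig (Suc b)" and "v = ig (b + l + 2)" and "w = ig (2*b+l+3)"
  define C where "C = fps_X ^ E * ip b * ip (b+l+1)"
  have key: "u*v = w*(u+v-1)"
  proof -
    have e: "Suc b + (b + l + 2) = 2*b+l+3" by simp
    have "ig (Suc b) * ig (b+l+2) = ig (Suc b + (b + l + 2)) * (ig (Suc b) + ig (b+l+2) - 1)"
      by (rule ig_key) simp_all
    thus ?thesis unfolding e u_def v_def w_def .
  qed
  have hu: "fps_X ^ Suc b * u = u - 1" unfolding u_def v_def w_def by (rule ig_rec) simp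
  have i1: "ip (Suc b) = ip b * u" by (simp add: ip_Suc u_def v_def w_def)
  have i2: "ip (b+l+2) = ip (b+l+1) * v"
    using ip_Suc[of "b+l+1"] by (simp add: u_def v_def w_def)
  have i3: "ip (Suc b + l) = ip (b+l+1)" by simp
  have x1: "fps_X ^ (Suc b * (Suc b + l + 2)) = fps_X ^ E * fps_X ^ Suc b"
    by (simp only: power_add[symmetric]) (simp add: E_def algebra_simps)
  have x2: "fps_X ^ (l+2) * fps_X ^ (b*(b+(l+2)+1)) = fps_X ^ E"
    by (simp only: power_add[symmetric]) (simp add: E_def algebra_simps)
  have wa1: "2 * Suc b + l + 1 = 2*b+l+3" by (simp add: eval_nat_numeral)
  have wa2: "2*b+(l+2)+1 = 2*b+l+3" by (simp add: eval_nat_numeral)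
  note wa = wa1 wa2
  have w1: "ig (2 * Suc b + l + 1) = w" "ig (2*b+(l+2)+1) = w"
    unfolding w_def wa by simp_all
  have L1: "term2 l (Suc b) = C * (fps_X ^ Suc b * u * w)"
    unfolding term2_def x1 w1 i1 i3 C_def by (simp only: mult_ac)
  have L2: "fps_X ^ (l+2) * term1 (l+2) b = C * (v * w)"
  proof -
    have "fps_X ^ (l+2) * term1 (l+2) b = (fps_X ^ (l+2) * fps_X ^ (b*(b+(l+2)+1))) * ip b * ip (b+(l+2)) * w"
      unfolding term1_def w1 by (simp only: mult_ac)
    also have "\<dots> = C * (v * w)" unfolding x2 C_def
      using i2 by (simp add: add.assoc mult_ac)
    finally show ?thesis .
  qed
  have R: "tt (l+1) (Suc b) = C * (u * v)"
  proof -
    have e: "Suc b * (Suc b + (l+1)) = E" by (simp add: E_def)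
    have "tt (l+1) (Suc b) = fps_X ^ E * ip (Suc b) * ip (b + l + 2)"
      unfolding tt_def e by (simp add: add.assoc)
    thus ?thesis unfolding i1 i2 C_def by (simp only: mult_ac)
  qed
  have "C * (fps_X ^ Suc b * u * w) + C * (v * w) = C * (fps_X ^ Suc b * u * w + v * w)"
    by (simp only: distrib_left)
  also have "\<dots> = C * (u * v)" using comb1[OF key hu] by (simp only:)
  finally show ?thesis unfolding L1 L2 R .
qed

lemma T1_S: "term1 l (Suc b) + fps_X ^ (2*l+4) * term2 (l+2) b = tt (l+1) (Suc b)"
proof -
  define E where "E = Suc b * (b + l + 2)"
  define u v w where "u = ig (Suc b)" and "v = ig (b + l + 2)" and "w = ig (2*b+l+3)"
  define C where "C = fps_X ^ E * ip b * ip (b+l+1)"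
  have key: "u*v = w*(u+v-1)"
  proof -
    have e: "Suc b + (b + l + 2) = 2*b+l+3" by simp
    have "ig (Suc b) * ig (b+l+2) = ig (Suc b + (b + l + 2)) * (ig (Suc b) + ig (b+l+2) - 1)"
      by (rule ig_key) simp_all
    thus ?thesis unfolding e u_def v_def w_def .
  qed
  have hv: "fps_X ^ (b+l+2) * v = v - 1" unfolding v_def by (rule ig_rec) simp
  have i1: "ip (Suc b) = ip b * u" by (simp add: ip_Suc u_def)
  have i2: "ip (b+(l+2)) = ip (b+l+1) * v"
    using ip_Suc[of "b+l+1"] by (simp add: v_def)
  have i3: "ip (Suc b + l) = ip (b+l+1)" by simp
  have x1: "fps_X ^ (Suc b * (Suc b + l + 1)) = fps_X ^ E"
    by (simp add: E_def)
  have ea: "2*l+4 + b*(b+(l+2)+2) = E + (b+l+2)" by (simp add: E_def algebra_simps)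
  have x2: "fps_X ^ (2*l+4) * fps_X ^ (b*(b+(l+2)+2)) = fps_X ^ E * fps_X ^ (b+l+2)"
    by (simp only: power_add[symmetric] ea)
  have wa1: "2 * Suc b + l + 1 = 2*b+l+3" by (simp add: eval_nat_numeral)
  have wa2: "2*b+(l+2)+1 = 2*b+l+3" by (simp add: eval_nat_numeral)
  have w1: "ig (2 * Suc b + l + 1) = w" "ig (2*b+(l+2)+1) = w"
    unfolding w_def wa1 wa2 by simp_all
  have L1: "term1 l (Suc b) = C * (u * w)"
    unfolding term1_def x1 w1 i1 i3 C_def by (simp only: mult_ac)
  have L2: "fps_X ^ (2*l+4) * term2 (l+2) b = C * (fps_X ^ (b+l+2) * v * w)"
  proof -
    have "fps_X ^ (2*l+4) * term2 (l+2) b = (fps_X ^ (2*l+4) * fps_X ^ (b*(b+(l+2)+2))) * ip b * ip (b+(l+2)) * w"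
      unfolding term2_def w1 by (simp only: mult_ac)
    also have "\<dots> = C * (fps_X ^ (b+l+2) * v * w)" unfolding x2 i2 C_def
      by (simp only: mult_ac)
    finally show ?thesis .
  qed
  have R: "tt (l+1) (Suc b) = C * (u * v)"
  proof -
    have e: "Suc b * (Suc b + (l+1)) = E" by (simp add: E_def)
    have i4: "ip (Suc b + (l+1)) = ip (b+l+1) * v" using ip_Suc[of "b+l+1"] by (simp add: v_def)
    have "tt (l+1) (Suc b) = fps_X ^ E * ip (Suc b) * ip (Suc b + (l + 1))"
      unfolding tt_def e by simp
    thus ?thesis unfolding i1 i4 C_def by (simp only: mult_ac)
  qed
  have "C * (u * w) + C * (fps_X ^ (b+l+2) * v * w) = C * (u * w + fps_X ^ (b+l+2) * v * w)"
    by (simp only: distrib_left)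
  also have "\<dots> = C * (u * v)" using comb2[OF key hv] by (simp only:)
  finally show ?thesis unfolding L1 L2 R .
qed

lemma lowo_tt': "lowo (tt m)" by (rule lowo_tt)

lemma K2_rel: "K2 l + fps_X ^ (l+2) * K1 (l+2) = PP"
proof -
  have "K2 l + fps_X ^ (l+2) * K1 (l+2) =
        term2 l 0 + isum (\<lambda>b. term2 l (Suc b)) + isum (\<lambda>b. fps_X ^ (l+2) * term1 (l+2) b)"
    unfolding K2_def K1_def
    by (simp only: isum_shift[OF lowo_term2, of l, symmetric] isum_mult[OF lowo_term1])
  also have "\<dots> = term2 l 0 + isum (\<lambda>b. term2 l (Suc b) + fps_X ^ (l+2) * term1 (l+2) b)"
    by (simp add: isum_add add.assoc)
  also have "\<dots> = tt (l+1) 0 + isum (\<lambda>b. tt (l+1) (Suc b))" by (simp only: T2_S term_0)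
  also have "\<dots> = Dur (l+1)" unfolding Dur_def by (rule isum_shift[OF lowo_tt, symmetric])
  finally show ?thesis by (simp add: Dur_PP)
qed

lemma K1_rel: "K1 l + fps_X ^ (2*l+4) * K2 (l+2) = PP"
proof -
  have "K1 l + fps_X ^ (2*l+4) * K2 (l+2) =
        term1 l 0 + isum (\<lambda>b. term1 l (Suc b)) + isum (\<lambda>b. fps_X ^ (2*l+4) * term2 (l+2) b)"
    unfolding K2_def K1_def
    by (simp only: isum_shift[OF lowo_term1, of l, symmetric] isum_mult[OF lowo_term2])
  also have "\<dots> = term1 l 0 + isum (\<lambda>b. term1 l (Suc b) + fps_X ^ (2*l+4) * term2 (l+2) b)"
    by (simp add: isum_add add.assoc)
  also have "\<dots> = tt (l+1) 0 + isum (\<lambda>b. tt (l+1) (Suc b))" by (simp only: T1_S term_0)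
  also have "\<dots> = Dur (l+1)" unfolding Dur_def by (rule isum_shift[OF lowo_tt, symmetric])
  finally show ?thesis by (simp add: Dur_PP)
qed


lemma tri2: "2 * tri k = k * Suc k"
  by (induction k) (simp_all add: algebra_simps)

lemma tri_sum: "tri a + tri (a+l) = a*(a+l+1) + tri l"
proof -
  have "2 * (tri a + tri (a+l)) = 2 * (a*(a+l+1) + tri l)"
    by (simp only: distrib_left tri2) (simp add: algebra_simps)
  thus ?thesis by simp
qed

lemma ig_geom: "k \<ge> 1 \<Longrightarrow> ig k = (\<Sum>c<N. fps_X ^ (c*k)) + fps_X ^ (N*k) * ig k"
proof (induction N)
  case 0 thus ?case by simp
next
  case (Suc N)
  have "fps_X ^ (N*k) * ig k = fps_X ^ (N*k) * (1 + fps_X ^ k * ig k)"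
    using ig_rec[OF Suc.prems] by (simp add: algebra_simps)
  also have "\<dots> = fps_X ^ (N*k) + fps_X ^ (Suc N * k) * ig k"
    by (simp add: algebra_simps power_add)
  finally have h: "fps_X ^ (N*k) * ig k = fps_X ^ (N*k) + fps_X ^ (Suc N * k) * ig k" .
  have "ig k = (\<Sum>c<N. fps_X ^ (c*k)) + fps_X ^ (N*k) * ig k" by (rule Suc.IH[OF Suc.prems])
  also have "\<dots> = (\<Sum>c<N. fps_X ^ (c*k)) + (fps_X ^ (N*k) + fps_X ^ (Suc N * k) * ig k)"
    by (simp only: h)
  also have "\<dots> = (\<Sum>c<Suc N. fps_X ^ (c*k)) + fps_X ^ (Suc N * k) * ig k"
    by (simp only: sum.lessThan_Suc add.assoc)
  finally show ?case .
qed

lemma ig_trunc: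
  assumes "k \<ge> 1" shows "(F * ig k) $ n = (F * (\<Sum>c\<le>n. fps_X ^ (c*k))) $ n"
proof -
  have e: "ig k = (\<Sum>c<Suc n. fps_X ^ (c*k)) + fps_X ^ (Suc n * k) * ig k" by (rule ig_geom[OF assms])
  have e': "ig k = (\<Sum>c\<le>n. fps_X ^ (c*k)) + fps_X ^ (Suc n * k) * ig k"
    unfolding lessThan_Suc_atMost[symmetric] by (rule e)
  have "F * ig k = F * ((\<Sum>c\<le>n. fps_X ^ (c*k)) + fps_X ^ (Suc n * k) * ig k)"
    by (subst e') (rule refl)
  also have "\<dots> = F * (\<Sum>c\<le>n. fps_X ^ (c*k)) + fps_X ^ (Suc n * k) * (F * ig k)"
    by (simp only: distrib_left mult_ac)
  finally have "(F * ig k) $ n = (F * (\<Sum>c\<le>n. fps_X ^ (c*k)) + fps_X ^ (Suc n * k) * (F * ig k)) $ n"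
    by (rule arg_cong[where f="\<lambda>x. x $ n"])
  moreover have "n < Suc n * k"
  proof -
    have "Suc n * 1 \<le> Suc n * k" using assms by (rule mult_le_mono2)
    thus ?thesis by simp
  qed
  ultimately show ?thesis by (simp only: fps_add_nth fps_X_power_mult_nth if_True add_0_right)
qed

lemma term1_DD: "fps_X ^ tri l * term1 l a = DD 0 a * DD 0 (a+l) * ig (2*a+l+1)"
proof -
  have "fps_X ^ tri l * term1 l a = fps_X ^ (a*(a+l+1) + tri l) * ip a * ip (a+l) * ig (2*a+l+1)"
    by (simp add: term1_def power_add mult_ac)
  also have "\<dots> = DD 0 a * DD 0 (a+l) * ig (2*a+l+1)"
    by (simp only: DD0 tri_sum[symmetric] power_add) (simp only: mult_ac)
  finally show ?thesis .
qed

lemma DD_mult_nth: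
  "(fps_X ^ c * DD c a * DD c (a+l)) $ n =
     (if c \<le> n then (\<Sum>i\<le>n-c. real (dd c a i * dd c (a+l) (n-c-i))) else 0)"
proof -
  have "(fps_X ^ c * DD c a * DD c (a+l)) $ n = (fps_X ^ c * (DD c a * DD c (a+l))) $ n"
    by (simp add: mult.assoc)
  also have "\<dots> = (if n < c then 0 else (DD c a * DD c (a+l)) $ (n - c))"
    by (rule fps_X_power_mult_nth)
  also have "\<dots> = (if c \<le> n then (\<Sum>i\<le>n-c. real (dd c a i * dd c (a+l) (n-c-i))) else 0)"
    by (simp add: fps_mult_nth DD_def atLeast0AtMost diff_diff_add)
  finally show ?thesis .
qed

lemma trip_fps: "real (card (trip (int l) n)) = (fps_X ^ tri l * K1 l) $ n"
proof -
  have "(fps_X ^ tri l * K1 l) $ n = (\<Sum>a\<le>n. (fps_X ^ tri l * term1 l a) $ n)"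
    unfolding K1_def by (simp only: isum_mult[OF lowo_term1, symmetric] isum_nth')
  also have "\<dots> = (\<Sum>a\<le>n. \<Sum>c\<le>n. (fps_X ^ c * DD c a * DD c (a+l)) $ n)"
  proof (rule sum.cong[OF refl])
    fix a
    have "(fps_X ^ tri l * term1 l a) $ n = (DD 0 a * DD 0 (a+l) * (\<Sum>c\<le>n. fps_X ^ (c*(2*a+l+1)))) $ n"
      by (simp only: term1_DD ig_trunc[of "2*a+l+1"])
    also have "\<dots> = (\<Sum>c\<le>n. (fps_X ^ c * DD c a * DD c (a+l)) $ n)"
    proof -
      have "\<And>c. DD 0 a * DD 0 (a+l) * fps_X ^ (c*(2*a+l+1)) = fps_X ^ c * DD c a * DD c (a+l)"
      proof -
        fix c
        have "c*(2*a+l+1) = c + c*a + c*(a+l)" by (simp add: algebra_simps)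
        thus "DD 0 a * DD 0 (a+l) * fps_X ^ (c*(2*a+l+1)) = fps_X ^ c * DD c a * DD c (a+l)"
          by (simp only: DDc[of c] power_add) (simp only: mult_ac)
      qed
      thus ?thesis by (simp add: sum_distrib_left fps_sum_nth)
    qed
    finally show "(fps_X ^ tri l * term1 l a) $ n = (\<Sum>c\<le>n. (fps_X ^ c * DD c a * DD c (a+l)) $ n)" .
  qed
  also have "\<dots> = (\<Sum>c\<le>n. \<Sum>a\<le>n. \<Sum>i\<le>n. if c + i \<le> n then real (dd c a i * dd c (a+l) (n-c-i)) else 0)"
  proof -
    have "\<And>c a. c \<le> n \<Longrightarrow> (\<Sum>i\<le>n-c. real (dd c a i * dd c (a+l) (n-c-i))) =
            (\<Sum>i\<le>n. if c + i \<le> n then real (dd c a i * dd c (a+l) (n-c-i)) else 0)"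
    proof -
      fix c a assume "c \<le> n"
      have "(\<Sum>i\<le>n. if c + i \<le> n then real (dd c a i * dd c (a+l) (n-c-i)) else 0) =
            (\<Sum>i\<in>{i\<in>{..n}. c + i \<le> n}. real (dd c a i * dd c (a+l) (n-c-i)))"
        by (rule sum.inter_filter[symmetric]) simp
      also have "{i\<in>{..n}. c + i \<le> n} = {..n-c}" using \<open>c \<le> n\<close> by auto
      finally show "(\<Sum>i\<le>n-c. real (dd c a i * dd c (a+l) (n-c-i))) =
            (\<Sum>i\<le>n. if c + i \<le> n then real (dd c a i * dd c (a+l) (n-c-i)) else 0)" by simp
    qed
    note inner = this
    have "(\<Sum>a\<le>n. \<Sum>c\<le>n. (fps_X ^ c * DD c a * DD c (a+l)) $ n) =
          (\<Sum>c\<le>n. \<Sum>a\<le>n. (fps_X ^ c * DD c a * DD c (a+l)) $ n)"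
      by (rule sum.swap)
    also have "\<dots> = (\<Sum>c\<le>n. \<Sum>a\<le>n. \<Sum>i\<le>n. if c + i \<le> n then real (dd c a i * dd c (a+l) (n-c-i)) else 0)"
    proof (rule sum.cong[OF refl], rule sum.cong[OF refl])
      fix c a assume "c \<in> {..n}"
      hence "c \<le> n" by simp
      thus "(fps_X ^ c * DD c a * DD c (a+l)) $ n =
          (\<Sum>i\<le>n. if c + i \<le> n then real (dd c a i * dd c (a+l) (n-c-i)) else 0)"
        by (simp only: DD_mult_nth inner if_True)
    qed
    finally show ?thesis .
  qed
  also have "\<dots> = real (card (trip (int l) n))"
    unfolding card_trip of_nat_sum by (intro sum.cong refl) simp
  finally show ?thesis ..
qed


definition al :: "nat \<Rightarrow> nat \<Rightarrow> nat" where "al j l = 6*j*j + 2*j + 3*j*l"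
definition be :: "nat \<Rightarrow> nat \<Rightarrow> nat" where "be j l = 6*j*j + 10*j + 4 + (3*j+2)*l"
definition ga :: "nat \<Rightarrow> nat \<Rightarrow> nat" where "ga j l = 6*j*j + 4*j + 3*j*l"
definition de :: "nat \<Rightarrow> nat \<Rightarrow> nat" where "de j l = 6*j*j + 8*j + 2 + (3*j+1)*l"

definition G1 :: "nat \<Rightarrow> real fps" where "G1 l = isum (\<lambda>j. fps_X ^ al j l - fps_X ^ be j l)"
definition G2 :: "nat \<Rightarrow> real fps" where "G2 l = isum (\<lambda>j. fps_X ^ ga j l - fps_X ^ de j l)"

lemma lowo_pow: assumes "\<And>b. b \<le> e b" shows "lowo (\<lambda>b. fps_X ^ e b :: real fps)"
  using lowo_X[of e "\<lambda>_. 1", OF assms] by simp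

lemma le_al: "j \<le> al j l" by (simp add: al_def)
lemma le_be: "j \<le> be j l" by (simp add: be_def)
lemma le_ga: "j \<le> ga j l" by (simp add: ga_def)
lemma le_de: "j \<le> de j l" by (simp add: de_def)

lemma isum_tele: assumes "lowo f" shows "isum (\<lambda>j. f j - f (Suc j)) = f 0"
  using isum_shift[OF assms] by (simp add: isum_diff)

lemma G1_rel: "G1 l + fps_X ^ (2*l+4) * G2 (l+2) = 1"
proof -
  have lg: "lowo (\<lambda>j. fps_X ^ ga j (l+2) - fps_X ^ de j (l+2))"
    by (intro lowo_diff lowo_pow le_ga le_de)
  have "G1 l + fps_X ^ (2*l+4) * G2 (l+2) =
        isum (\<lambda>j. (fps_X ^ al j l - fps_X ^ be j l) + fps_X ^ (2*l+4) * (fps_X ^ ga j (l+2) - fps_X ^ de j (l+2)))"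
    unfolding G1_def G2_def by (simp only: isum_mult[OF lg, symmetric] isum_add)
  also have "\<dots> = isum (\<lambda>j. fps_X ^ al j l - fps_X ^ al (Suc j) l)"
  proof -
    have eqj: "\<And>j. (fps_X ^ al j l - fps_X ^ be j l) + fps_X ^ (2*l+4) * (fps_X ^ ga j (l+2) - fps_X ^ de j (l+2))
           = (fps_X ^ al j l - fps_X ^ al (Suc j) l :: real fps)"
    proof -
      fix j
      have e1: "2*l+4 + ga j (l+2) = be j l" by (simp add: ga_def be_def algebra_simps)
      have e2: "2*l+4 + de j (l+2) = al (Suc j) l" by (simp add: de_def al_def algebra_simps)
      show "(fps_X ^ al j l - fps_X ^ be j l) + fps_X ^ (2*l+4) * (fps_X ^ ga j (l+2) - fps_X ^ de j (l+2))
           = (fps_X ^ al j l - fps_X ^ al (Suc j) l :: real fps)"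
        by (simp only: right_diff_distrib power_add[symmetric] e1 e2) simp
    qed
    show ?thesis by (rule arg_cong[where f=isum], rule ext, rule eqj)
  qed
  also have "\<dots> = 1" by (subst isum_tele) (simp_all add: lowo_pow le_al al_def)
  finally show ?thesis .
qed

lemma G2_rel: "G2 l + fps_X ^ (l+2) * G1 (l+2) = 1"
proof -
  have lg: "lowo (\<lambda>j. fps_X ^ al j (l+2) - fps_X ^ be j (l+2))"
    by (intro lowo_diff lowo_pow le_al le_be)
  have "G2 l + fps_X ^ (l+2) * G1 (l+2) =
        isum (\<lambda>j. (fps_X ^ ga j l - fps_X ^ de j l) + fps_X ^ (l+2) * (fps_X ^ al j (l+2) - fps_X ^ be j (l+2)))"
    unfolding G1_def G2_def by (simp only: isum_mult[OF lg, symmetric] isum_add)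
  also have "\<dots> = isum (\<lambda>j. fps_X ^ ga j l - fps_X ^ ga (Suc j) l)"
  proof -
    have eqj: "\<And>j. (fps_X ^ ga j l - fps_X ^ de j l) + fps_X ^ (l+2) * (fps_X ^ al j (l+2) - fps_X ^ be j (l+2))
           = (fps_X ^ ga j l - fps_X ^ ga (Suc j) l :: real fps)"
    proof -
      fix j
      have e1: "l+2 + al j (l+2) = de j l" by (simp add: al_def de_def algebra_simps)
      have e2: "l+2 + be j (l+2) = ga (Suc j) l" by (simp add: be_def ga_def algebra_simps)
      show "(fps_X ^ ga j l - fps_X ^ de j l) + fps_X ^ (l+2) * (fps_X ^ al j (l+2) - fps_X ^ be j (l+2))
           = (fps_X ^ ga j l - fps_X ^ ga (Suc j) l :: real fps)"
        by (simp only: right_diff_distrib power_add[symmetric] e1 e2) simp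
    qed
    show ?thesis by (rule arg_cong[where f=isum], rule ext, rule eqj)
  qed
  also have "\<dots> = 1" by (subst isum_tele) (simp_all add: lowo_pow le_ga ga_def)
  finally show ?thesis .
qed

lemma K1_G1: "K1 l = PP * G1 l"
proof -
  define D1 where "D1 l = K1 l - PP * G1 l" for l
  define D2 where "D2 l = K2 l - PP * G2 l" for l
  have r1: "D1 l = - (fps_X ^ (2*l+4) * D2 (l+2))" for l
  proof -
    have "K1 l = PP - fps_X ^ (2*l+4) * K2 (l+2)" using K1_rel[of l] by (simp add: algebra_simps)
    moreover have "PP * G1 l = PP - fps_X ^ (2*l+4) * (PP * G2 (l+2))"
      using arg_cong[OF G1_rel[of l], of "\<lambda>x. PP * x"] by (simp add: algebra_simps)
    ultimately show ?thesis by (simp add: D1_def D2_def algebra_simps)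
  qed
  have r2: "D2 l = - (fps_X ^ (l+2) * D1 (l+2))" for l
  proof -
    have "K2 l = PP - fps_X ^ (l+2) * K1 (l+2)" using K2_rel[of l] by (simp add: algebra_simps)
    moreover have "PP * G2 l = PP - fps_X ^ (l+2) * (PP * G1 (l+2))"
      using arg_cong[OF G2_rel[of l], of "\<lambda>x. PP * x"] by (simp add: algebra_simps)
    ultimately show ?thesis by (simp add: D1_def D2_def algebra_simps)
  qed
  have "\<forall>l. D1 l $ n = 0 \<and> D2 l $ n = 0" for n
  proof (induction n rule: less_induct)
    case (less n)
    show ?case
    proof
      fix l
      have "D1 l $ n = - (if n < 2*l+4 then 0 else D2 (l+2) $ (n - (2*l+4)))"
        by (simp only: r1 fps_neg_nth fps_X_power_mult_nth)
      also have "\<dots> = 0" using less by auto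
      finally have a: "D1 l $ n = 0" .
      have "D2 l $ n = - (if n < l+2 then 0 else D1 (l+2) $ (n - (l+2)))"
        by (simp only: r2 fps_neg_nth fps_X_power_mult_nth)
      also have "\<dots> = 0" using less by auto
      finally show "D1 l $ n = 0 \<and> D2 l $ n = 0" using a by simp
    qed
  qed
  hence "D1 l = 0" by (intro fps_ext) simp
  thus ?thesis by (simp add: D1_def)
qed


definition EE :: "nat \<Rightarrow> nat \<Rightarrow> nat" where "EE k l = 2*k*(k+1) div 3 + k*l"
definition kf :: "nat \<Rightarrow> nat \<Rightarrow> real fps" where
  "kf l k = fps_const (real_of_int (kron_m3 k)) * fps_X ^ EE k l"

lemma le_EE: "k \<le> EE k l"
proof -
  have "3*k \<le> 2*k*(k+1)" by (cases k) (simp_all add: algebra_simps)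
  hence "3*k div 3 \<le> 2*k*(k+1) div 3" by (rule div_le_mono)
  thus ?thesis by (simp add: EE_def)
qed

lemma lowo_kf: "lowo (kf l)"
  unfolding lowo_def kf_def
proof (intro allI impI)
  fix b n assume "n < (b::nat)"
  hence "n < EE b l" using le_EE[of b l] by linarith
  thus "(fps_const (real_of_int (kron_m3 b)) * fps_X ^ EE b l) $ n = 0"
    by (simp only: fps_mult_left_const_nth) (simp add: fps_X_power_mult_right_nth)
qed

lemma sum3: fixes m :: nat shows "(\<Sum>k<3*m. h k) = (\<Sum>j<m. h (3*j) + h (3*j+1) + h (3*j+2))"
proof (induction m)
  case 0 thus ?case by simp
next
  case (Suc m)
  have e: "3 * Suc m = Suc (Suc (Suc (3*m)))" by simp
  have "(\<Sum>k<3 * Suc m. h k) = (\<Sum>k<3*m. h k) + h (3*m) + h (Suc (3*m)) + h (Suc (Suc (3*m)))"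
    by (simp only: e sum.lessThan_Suc)
  thus ?case using Suc by (simp add: add.assoc)
qed

lemma isum_group:
  assumes "lowo f" shows "isum f = isum (\<lambda>j. f (3*j) + f (3*j+1) + f (3*j+2))"
proof (rule fps_ext)
  fix n
  have "isum (\<lambda>j. f (3*j) + f (3*j+1) + f (3*j+2)) $ n = (\<Sum>j<Suc n. (f (3*j) + f (3*j+1) + f (3*j+2)) $ n)"
    by (simp add: isum_nth' lessThan_Suc_atMost)
  also have "\<dots> = (\<Sum>k<3 * Suc n. f k $ n)" by (simp only: fps_add_nth sum3)
  also have "\<dots> = (\<Sum>k\<le>n. f k $ n)"
    by (rule sum.mono_neutral_right) (use assms in \<open>auto simp: lowo_def\<close>)
  finally show "isum f $ n = isum (\<lambda>j. f (3*j) + f (3*j+1) + f (3*j+2)) $ n" by (simp add: isum_nth')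
qed

lemma EE3: "EE (3*j) l = al j l" "EE (3*j+2) l = be j l"
proof -
  have "2*(3*j)*(3*j+1) = 3 * (2*j*(3*j+1))" by simp
  thus "EE (3*j) l = al j l" by (simp only: EE_def) (simp add: al_def algebra_simps)
  have "2*(3*j+2)*(3*j+2+1) = 3 * (2*(3*j+2)*(j+1))" by (simp add: algebra_simps)
  thus "EE (3*j+2) l = be j l" by (simp only: EE_def) (simp add: be_def algebra_simps)
qed

lemma GK: "isum (kf l) = G1 l"
proof -
  have "\<And>j. kf l (3*j) + kf l (3*j+1) + kf l (3*j+2) = fps_X ^ al j l - fps_X ^ be j l"
  proof -
    fix j :: nat
    have m0: "(3*j) mod 3 = 0" and m1: "(3*j+1) mod 3 = 1" and m2: "(3*j+2) mod 3 = 2"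
      by presburger+
    have "kron_m3 (3*j) = 1" "kron_m3 (3*j+1) = 0" "kron_m3 (3*j+2) = -1"
      unfolding kron_m3_def m0 m1 m2 by simp_all
    thus "kf l (3*j) + kf l (3*j+1) + kf l (3*j+2) = fps_X ^ al j l - fps_X ^ be j l"
      unfolding kf_def EE3 by (simp add: fps_const_neg[symmetric] del: fps_const_neg)
  qed
  thus ?thesis unfolding G1_def isum_group[OF lowo_kf] by simp
qed

lemma K1_coeff:
  "K1 l $ N = (\<Sum>k\<le>N. real_of_int (kron_m3 k) * (if N < EE k l then 0 else real (pc (N - EE k l))))"
proof -
  have "K1 l $ N = isum (\<lambda>k. PP * kf l k) $ N"
    by (simp only: K1_G1 GK[symmetric] isum_mult[OF lowo_kf])
  also have "\<dots> = (\<Sum>k\<le>N. (PP * kf l k) $ N)" by (simp add: isum_nth')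
  also have "\<dots> = (\<Sum>k\<le>N. real_of_int (kron_m3 k) * (if N < EE k l then 0 else real (pc (N - EE k l))))"
  proof (rule sum.cong[OF refl])
    fix k
    have "PP * kf l k = fps_const (real_of_int (kron_m3 k)) * (fps_X ^ EE k l * PP)"
      by (simp only: kf_def mult_ac)
    hence "(PP * kf l k) $ N = (fps_const (real_of_int (kron_m3 k)) * (fps_X ^ EE k l * PP)) $ N"
      by (rule arg_cong)
    also have "\<dots> = real_of_int (kron_m3 k) * (if N < EE k l then 0 else real (pc (N - EE k l)))"
      by (simp only: fps_mult_left_const_nth fps_X_power_mult_nth) (simp add: PP_def)
    finally show "(PP * kf l k) $ N = real_of_int (kron_m3 k) * (if N < EE k l then 0 else real (pc (N - EE k l)))" .
  qed
  finally show ?thesis .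
qed


lemma trip_abs: "card (trip l m) = card (trip (int (nat \<bar>l\<bar>)) m)"
proof (cases "l \<ge> 0")
  case True thus ?thesis by simp
next
  case False
  hence "l = - int (nat \<bar>l\<bar>)" by simp
  hence "card (trip l m) = card (trip (- int (nat \<bar>l\<bar>)) m)" by simp
  thus ?thesis by (simp only: trip_sym)
qed

lemma tri_div: "int (tri L) = int L * (int L + 1) div 2"
proof -
  have "2 * tri L = L * Suc L" by (rule tri2)
  hence "tri L = L * (L + 1) div 2" by simp
  hence "int (tri L) = int (L * (L + 1)) div int 2" by (simp only: zdiv_int)
  thus ?thesis by (simp add: algebra_simps)
qed

lemma coeff_main:
  fixes l N :: int
  defines "L \<equiv> nat \<bar>l\<bar>"
  shows "real_of_int (Vd l (N + int (tri L))) =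
    (\<Sum>k\<le>nat N. real_of_int (kron_m3 k) *
        (if N < int (EE k L) then 0 else real (pc (nat (N - int (EE k L))))))"
proof -
  have ta: "card (trip l m) = card (trip (int L) m)" for m unfolding L_def by (rule trip_abs)
  show ?thesis
proof (cases "N < 0")
  case True
  have rhs: "(\<Sum>k\<le>nat N. real_of_int (kron_m3 k) *
        (if N < int (EE k L) then 0 else real (pc (nat (N - int (EE k L)))))) = 0"
    using True by simp
  show ?thesis
  proof (cases "N + int (tri L) < 0")
    case True thus ?thesis using rhs by (simp add: Vd_def)
  next
    case False
    hence "Vd l (N + int (tri L)) = int (card (trip l (nat (N + int (tri L)))))" by (simp add: Vd_trip)
    also have "\<dots> = int (card (trip (int L) (nat (N + int (tri L)))))" by (simp only: ta)
    finally have "real_of_int (Vd l (N + int (tri L))) = (fps_X ^ tri L * K1 L) $ nat (N + int (tri L))"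
      by (simp add: trip_fps)
    also have "\<dots> = 0"
    proof -
      have "nat (N + int (tri L)) < tri L" using \<open>N < 0\<close> False by (simp add: nat_less_iff)
      thus ?thesis by (simp add: fps_X_power_mult_nth)
    qed
    finally show ?thesis using rhs by simp
  qed
next
  case False
  hence "Vd l (N + int (tri L)) = int (card (trip l (nat (N + int (tri L)))))" by (simp add: Vd_trip)
  also have "\<dots> = int (card (trip (int L) (nat (N + int (tri L)))))" by (simp only: ta)
  finally have "real_of_int (Vd l (N + int (tri L))) = (fps_X ^ tri L * K1 L) $ nat (N + int (tri L))"
    by (simp add: trip_fps)
  also have "\<dots> = K1 L $ nat N" using False by (simp add: fps_X_power_mult_nth nat_add_distrib)
  also have "\<dots> = (\<Sum>k\<le>nat N. real_of_int (kron_m3 k) *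
        (if N < int (EE k L) then 0 else real (pc (nat (N - int (EE k L))))))"
  proof -
    have "\<And>k. (if nat N < EE k L then 0 else real (pc (nat N - EE k L))) =
              (if N < int (EE k L) then 0 else real (pc (nat (N - int (EE k L)))))"
      using False by (auto simp: nat_diff_distrib)
    thus ?thesis by (simp add: K1_coeff)
  qed
  finally show ?thesis .
qed
qed

lemma pc_partitions: "0 \<le> x \<Longrightarrow> partitions_count x = int (pc (nat x))"
  by (simp add: partitions_count_def pc_def)

lemma part1:
  fixes N l :: int
  shows "(\<lambda>n. real_of_int (kron_m3 n *
                partitions_count (N - (2 * int n * (int n + 1)) div 3 - int n * \<bar>l\<bar>)))
            sums real_of_int (Vd l (N + \<bar>l\<bar> * (\<bar>l\<bar> + 1) div 2))"
proof -
  define L where "L = nat \<bar>l\<bar>"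
  have aL: "\<bar>l\<bar> = int L" by (simp add: L_def)
  let ?g = "\<lambda>k. real_of_int (kron_m3 k) *
        (if N < int (EE k L) then 0 else real (pc (nat (N - int (EE k L)))))"
  have feq: "real_of_int (kron_m3 n *
                partitions_count (N - (2 * int n * (int n + 1)) div 3 - int n * \<bar>l\<bar>)) = ?g n" for n
  proof -
    have "int (2*n*(n+1) div 3) = int (2*n*(n+1)) div int 3" by (rule zdiv_int)
    also have "int (2*n*(n+1)) = 2 * int n * (int n + 1)" by (simp add: algebra_simps)
    finally have "(2 * int n * (int n + 1)) div 3 = int (2*n*(n+1) div 3)" by simp
    hence e: "N - (2 * int n * (int n + 1)) div 3 - int n * \<bar>l\<bar> = N - int (EE n L)"
      by (simp add: EE_def aL)
    show ?thesis unfolding e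
      by (cases "N < int (EE n L)") (simp_all add: partitions_count_def pc_def)
  qed
  have "?g sums (\<Sum>k\<le>nat N. ?g k)"
  proof (rule sums_finite)
    fix k assume "k \<notin> {..nat N}"
    hence "nat N < k" by simp
    hence "int (nat N) < int k" by (simp only: of_nat_less_iff)
    moreover have "N \<le> int (nat N)" by simp
    moreover have "int k \<le> int (EE k L)" using le_EE[of k L] by simp
    ultimately have "N < int (EE k L)" by linarith
    thus "?g k = 0" by simp
  qed simp
  note gs = this
  have tl: "\<bar>l\<bar> * (\<bar>l\<bar> + 1) div 2 = int (tri L)" by (simp add: aL tri_div)
  have fe: "(\<lambda>n. real_of_int (kron_m3 n *
                partitions_count (N - (2 * int n * (int n + 1)) div 3 - int n * \<bar>l\<bar>))) = ?g"
    by (rule ext, rule feq)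
  have cm: "real_of_int (Vd l (N + int (tri L))) = (\<Sum>k\<le>nat N. ?g k)"
    by (rule coeff_main[of l N, folded L_def])
  show ?thesis unfolding fe tl cm by (rule gs)
qed

lemma sum_only0: fixes g :: "nat \<Rightarrow> real" and M :: nat
  shows "(\<And>k. k \<ge> 1 \<Longrightarrow> g k = 0) \<Longrightarrow> (\<Sum>k\<le>M. g k) = g 0"
  by (induction M) auto

lemma part2:
  fixes m n :: int
  assumes "0 \<le> n" "real_of_int n < real_of_int (\<bar>m\<bar> * (\<bar>m\<bar> + 5)) / 2 + 4"
  shows "Vd m n = partitions_count (n - \<bar>m\<bar> * (\<bar>m\<bar> + 1) div 2)"
proof -
  define L where "L = nat \<bar>m\<bar>"
  have aL: "\<bar>m\<bar> = int L" by (simp add: L_def)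
  define N where "N = n - int (tri L)"
  have t2: "2 * int (tri L) = int L * (int L + 1)"
  proof -
    have "int (2 * tri L) = int (L * Suc L)" using tri2[of L] by (rule arg_cong)
    thus ?thesis by (simp add: algebra_simps)
  qed
  have "real_of_int (2*n) < real_of_int (\<bar>m\<bar> * (\<bar>m\<bar> + 5) + 8)" using assms(2) by simp
  hence "2*n < int L * (int L + 5) + 8" unfolding of_int_less_iff aL .
  hence NL: "N < 2 * int L + 4" using t2 by (simp add: N_def algebra_simps)
  have "real_of_int (Vd m n) = real_of_int (Vd m (N + int (tri L)))" by (simp add: N_def)
  also have "\<dots> = (\<Sum>k\<le>nat N. real_of_int (kron_m3 k) *
        (if N < int (EE k L) then 0 else real (pc (nat (N - int (EE k L))))))"
    using coeff_main[of m N, folded L_def] .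
  also have "\<dots> = (if N < 0 then 0 else real (pc (nat N)))"
  proof (subst sum_only0)
    fix k :: nat assume "k \<ge> 1"
    show "real_of_int (kron_m3 k) * (if N < int (EE k L) then 0 else real (pc (nat (N - int (EE k L))))) = 0"
    proof (cases "k = 1")
      case True thus ?thesis by (simp add: kron_m3_def)
    next
      case False
      hence k2: "2 \<le> k" using \<open>k \<ge> 1\<close> by simp
      have "12 \<le> 2*k*(k+1)"
      proof -
        have "2*2*(2+1) \<le> 2*k*(k+1)" using k2 by (intro mult_le_mono) simp_all
        thus ?thesis by simp
      qed
      hence "12 div 3 \<le> 2*k*(k+1) div 3" by (rule div_le_mono)
      hence h4: "4 \<le> 2*k*(k+1) div 3" by simp
      have h5: "2*L \<le> k*L" by (rule mult_le_mono1[OF k2])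
      have "4 + 2*L \<le> EE k L" unfolding EE_def using h4 h5 by linarith
      hence "N < int (EE k L)" using NL by linarith
      thus ?thesis by simp
    qed
  qed (simp add: EE_def kron_m3_def)
  finally have "real_of_int (Vd m n) = (if N < 0 then 0 else real (pc (nat N)))" .
  moreover have "\<bar>m\<bar> * (\<bar>m\<bar> + 1) div 2 = int (tri L)" by (simp add: aL tri_div)
  hence e: "n - \<bar>m\<bar> * (\<bar>m\<bar> + 1) div 2 = N" by (simp add: N_def)
  have "real_of_int (partitions_count N) = (if N < 0 then 0 else real (pc (nat N)))"
    by (simp add: partitions_count_def pc_def)
  ultimately have "real_of_int (Vd m n) = real_of_int (partitions_count N)" by simp
  thus ?thesis unfolding e of_int_eq_iff .
qed

theorem proposition1:
  shows "(\<forall>N l :: int.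
            (\<lambda>n. real_of_int (kron_m3 n *
                partitions_count (N - (2 * int n * (int n + 1)) div 3 - int n * \<bar>l\<bar>)))
            sums real_of_int (Vd l (N + \<bar>l\<bar> * (\<bar>l\<bar> + 1) div 2)))
       \<and> (\<forall>m n :: int. 0 \<le> n \<and>
            real_of_int n < real_of_int (\<bar>m\<bar> * (\<bar>m\<bar> + 5)) / 2 + 4 \<longrightarrow>
            Vd m n = partitions_count (n - \<bar>m\<bar> * (\<bar>m\<bar> + 1) div 2))"
proof (intro conjI allI impI)
  fix N l :: int
  show "(\<lambda>n. real_of_int (kron_m3 n *
                partitions_count (N - (2 * int n * (int n + 1)) div 3 - int n * \<bar>l\<bar>)))
            sums real_of_int (Vd l (N + \<bar>l\<bar> * (\<bar>l\<bar> + 1) div 2))" by (rule part1)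
next
  fix m n :: int
  assume h: "0 \<le> n \<and> real_of_int n < real_of_int (\<bar>m\<bar> * (\<bar>m\<bar> + 5)) / 2 + 4"
  show "Vd m n = partitions_count (n - \<bar>m\<bar> * (\<bar>m\<bar> + 1) div 2)"
    by (rule part2[OF conjunct1[OF h] conjunct2[OF h]])
qed


end
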